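(* There is a randomized algorithm that reconstructs any connected chordal graph $G$ of maximum degree $\Delta$ using a distance oracle, with expected query complexity $$O\big(\Delta^3 2^\Delta\cdot n(2^\Delta+\log^2 n)\log n\big),$$ which is $\tilde O(n)$ when $\Delta=O(\log\log n)$.
   Context: Let $G=(V,E)$ be an unknown connected, unweighted, undirected simple graph with $|V|=n$, and let $\delta$ be its shortest-path metric. A distance oracle receives $(u,v)\in V^2$ and returns $\delta(u,v)$. In the reconstruction problem, the algorithm is given $V$ (and the degree bound $\Delta$), has access to the oracle, and must output $E$. A graph is chordal if every cycle of length greater than three has a chord (an edge joining two nonconsecutive vertices of the cycle). *)

theory Defs
  imports "HOL-Probability.Probability"
begin

definition simple_graph :: "nat \<Rightarrow> (nat \<times> nat) set \<Rightarrow> bool" where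
  "simple_graph n E \<longleftrightarrow> E \<subseteq> {0..<n} \<times> {0..<n} \<and> sym E \<and> irrefl E"

definition connected_graph :: "nat \<Rightarrow> (nat \<times> nat) set \<Rightarrow> bool" where
  "connected_graph n E \<longleftrightarrow> (\<forall>u\<in>{0..<n}. \<forall>v\<in>{0..<n}. (u, v) \<in> E\<^sup>*)"

definition max_degree_le :: "nat \<Rightarrow> (nat \<times> nat) set \<Rightarrow> nat \<Rightarrow> bool" where
  "max_degree_le n E \<Delta> \<longleftrightarrow> (\<forall>u\<in>{0..<n}. card {v. (u, v) \<in> E} \<le> \<Delta>)"

definition is_cycle :: "(nat \<times> nat) set \<Rightarrow> nat list \<Rightarrow> bool" where
  "is_cycle E cs \<longleftrightarrow> length cs \<ge> 3 \<and> distinct cs \<and>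
     (\<forall>i < length cs. (cs ! i, cs ! ((i + 1) mod length cs)) \<in> E)"

definition has_chord :: "(nat \<times> nat) set \<Rightarrow> nat list \<Rightarrow> bool" where
  "has_chord E cs \<longleftrightarrow> (\<exists>i < length cs. \<exists>j < length cs.
     i \<noteq> j \<and> j \<noteq> (i + 1) mod length cs \<and> i \<noteq> (j + 1) mod length cs \<and>
     (cs ! i, cs ! j) \<in> E)"

definition chordal :: "(nat \<times> nat) set \<Rightarrow> bool" where
  "chordal E \<longleftrightarrow> (\<forall>cs. is_cycle E cs \<and> length cs > 3 \<longrightarrow> has_chord E cs)"

definition sp_dist :: "(nat \<times> nat) set \<Rightarrow> nat \<Rightarrow> nat \<Rightarrow> nat" where
  "sp_dist E u v = (LEAST k. (u, v) \<in> E ^^ k)"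

datatype action = Ask nat nat | Answer "(nat \<times> nat) set"

text \<open>A randomized query algorithm for inputs (n, \<Delta>) is a strategy that, given n, \<Delta>,
an infinite sequence of fair random bits, and the list of oracle answers received so
far, decides the next action: ask the oracle for a pair, or output an edge set.\<close>

type_synonym strategy = "nat \<Rightarrow> nat \<Rightarrow> (nat \<Rightarrow> bool) \<Rightarrow> nat list \<Rightarrow> action"

fun history :: "strategy \<Rightarrow> nat \<Rightarrow> nat \<Rightarrow> (nat \<Rightarrow> nat \<Rightarrow> nat) \<Rightarrow> (nat \<Rightarrow> bool) \<Rightarrow> nat \<Rightarrow> nat list" where
  "history A n \<Delta> d \<omega> 0 = []"
| "history A n \<Delta> d \<omega> (Suc k) =
     (case A n \<Delta> \<omega> (history A n \<Delta> d \<omega> k) of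
        Ask u v \<Rightarrow> history A n \<Delta> d \<omega> k @ [d u v]
      | Answer _ \<Rightarrow> history A n \<Delta> d \<omega> k)"

definition is_answer :: "action \<Rightarrow> bool" where
  "is_answer a \<longleftrightarrow> (\<exists>F. a = Answer F)"

definition halts :: "strategy \<Rightarrow> nat \<Rightarrow> nat \<Rightarrow> (nat \<Rightarrow> nat \<Rightarrow> nat) \<Rightarrow> (nat \<Rightarrow> bool) \<Rightarrow> bool" where
  "halts A n \<Delta> d \<omega> \<longleftrightarrow> (\<exists>k. is_answer (A n \<Delta> \<omega> (history A n \<Delta> d \<omega> k)))"

text \<open>Number of queries made before the output (the step index k is exactly the
number of queries issued so far).\<close>

definition num_queries :: "strategy \<Rightarrow> nat \<Rightarrow> nat \<Rightarrow> (nat \<Rightarrow> nat \<Rightarrow> nat) \<Rightarrow> (nat \<Rightarrow> bool) \<Rightarrow> nat" where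
  "num_queries A n \<Delta> d \<omega> = (LEAST k. is_answer (A n \<Delta> \<omega> (history A n \<Delta> d \<omega> k)))"

definition run_output :: "strategy \<Rightarrow> nat \<Rightarrow> nat \<Rightarrow> (nat \<Rightarrow> nat \<Rightarrow> nat) \<Rightarrow> (nat \<Rightarrow> bool) \<Rightarrow> (nat \<times> nat) set" where
  "run_output A n \<Delta> d \<omega> =
     (case A n \<Delta> \<omega> (history A n \<Delta> d \<omega> (num_queries A n \<Delta> d \<omega>)) of
        Answer F \<Rightarrow> F | Ask _ _ \<Rightarrow> {})"

definition query_cost :: "strategy \<Rightarrow> nat \<Rightarrow> nat \<Rightarrow> (nat \<Rightarrow> nat \<Rightarrow> nat) \<Rightarrow> (nat \<Rightarrow> bool) \<Rightarrow> ennreal" where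
  "query_cost A n \<Delta> d \<omega> = (if halts A n \<Delta> d \<omega> then of_nat (num_queries A n \<Delta> d \<omega>) else \<infinity>)"

definition coins :: "(nat \<Rightarrow> bool) measure" where
  "coins = PiM UNIV (\<lambda>_. measure_pmf (bernoulli_pmf (1/2)))"

end

theory Submission
  imports Defs
begin


lemma relpow_comp: "(a,b) \<in> R^^p \<Longrightarrow> (b,c) \<in> R^^q \<Longrightarrow> (a,c) \<in> R^^(p+q)" for R :: "(nat\<times>nat) set"
  by (auto simp: relpow_add)

lemma relpow_mono_rel: "R \<subseteq> S \<Longrightarrow> (a,b) \<in> R^^k \<Longrightarrow> (a,b) \<in> S^^k" for R :: "(nat\<times>nat) set"
proof (induction k arbitrary: b)
  case 0 then show ?case by auto
next
  case (Suc k) then show ?case by (auto elim!: relpow_Suc_E intro: relpow_Suc_I)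
qed

lemma relpow_sym: "sym R \<Longrightarrow> (a,b) \<in> R^^k \<Longrightarrow> (b,a) \<in> R^^k" for R :: "(nat\<times>nat) set"
proof (induction k arbitrary: b)
  case 0 then show ?case by auto
next
  case (Suc k)
  then obtain y where "(a,y) \<in> R^^k" "(y,b) \<in> R" by (auto elim!: relpow_Suc_E)
  then show ?case using Suc by (metis relpow_Suc_I2 symD)
qed

lemma walk_seg:
  fixes f :: "nat \<Rightarrow> nat" and R :: "(nat\<times>nat) set"
  assumes "\<forall>j. a \<le> j \<longrightarrow> j < b \<longrightarrow> (f j, f (Suc j)) \<in> R" "a \<le> b"
  shows "(f a, f b) \<in> R^^(b-a)"
  using assms
proof (induction b)
  case 0 then show ?case by simp
next
  case (Suc b)
  show ?case
  proof (cases "a = Suc b")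
    case True then show ?thesis by simp
  next
    case False
    then have "a \<le> b" using Suc by simp
    then have "(f a, f b) \<in> R^^(b-a)" using Suc by simp
    moreover have "(f b, f (Suc b)) \<in> R" using Suc \<open>a \<le> b\<close> by simp
    ultimately show ?thesis using \<open>a \<le> b\<close> by (metis Suc_diff_le relpow_Suc_I)
  qed
qed

lemma shortest_induced:
  fixes f :: "nat \<Rightarrow> nat" and R :: "(nat\<times>nat) set"
  assumes w: "\<forall>j<m. (f j, f (Suc j)) \<in> R" and sh: "\<forall>k<m. (f 0, f m) \<notin> R^^k"
    and ij: "i+2 \<le> j" "j \<le> m"
  shows "(f i, f j) \<notin> R"
proof
  assume e: "(f i, f j) \<in> R"
  have "(f 0, f i) \<in> R^^(i-0)" by (rule walk_seg) (use w ij in auto)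
  moreover have "(f j, f m) \<in> R^^(m-j)" by (rule walk_seg) (use w ij in auto)
  ultimately have "(f 0, f m) \<in> R^^(i + 1 + (m-j))"
    using e by (metis diff_zero relpow_1 relpow_comp)
  moreover have "i + 1 + (m-j) < m" using ij by simp
  ultimately show False using sh by blast
qed

lemma shortest_inj:
  fixes f :: "nat \<Rightarrow> nat" and R :: "(nat\<times>nat) set"
  assumes w: "\<forall>j<m. (f j, f (Suc j)) \<in> R" and sh: "\<forall>k<m. (f 0, f m) \<notin> R^^k"
    and ij: "i < j" "j \<le> m"
  shows "f i \<noteq> f j"
proof
  assume e: "f i = f j"
  have "(f 0, f i) \<in> R^^(i-0)" by (rule walk_seg) (use w ij in auto)
  moreover have "(f j, f m) \<in> R^^(m-j)" by (rule walk_seg) (use w ij in auto)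
  ultimately have "(f 0, f m) \<in> R^^(i + (m-j))"
    using e by (metis diff_zero relpow_comp)
  moreover have "i + (m-j) < m" using ij by simp
  ultimately show False using sh by blast
qed

lemma no_induced_cycle:
  assumes "chordal E" "distinct cs" "length cs \<ge> 4"
    "\<forall>i<length cs. (cs!i, cs!((i+1) mod length cs)) \<in> E"
    "\<forall>i<length cs. \<forall>j<length cs. (cs!i, cs!j) \<in> E \<longrightarrow> j = (i+1) mod length cs \<or> i = (j+1) mod length cs"
  shows False
proof -
  have "is_cycle E cs" using assms unfolding is_cycle_def by auto
  then have "has_chord E cs" using assms(1,3) unfolding chordal_def by auto
  then show False using assms(5) unfolding has_chord_def by blast
qed

locale cg =
  fixes n :: nat and E :: "(nat \<times> nat) set"
  assumes sg: "simple_graph n E" and conn: "connected_graph n E" and ch: "chordal E"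
    and npos: "0 < n"
begin

abbreviation dd where "dd \<equiv> sp_dist E"
definition lvl where "lvl x = sp_dist E 0 x"
definition B where "B k = {v. v < n \<and> lvl v \<le> k}"
definition L where "L k = {v. v < n \<and> lvl v = k}"
definition EB where "EB k = E \<inter> (B k \<times> B k)"

lemma E_sub: "(x,y) \<in> E \<Longrightarrow> x < n \<and> y < n"
  using sg unfolding simple_graph_def by auto
lemma E_sym: "(x,y) \<in> E \<Longrightarrow> (y,x) \<in> E"
  using sg unfolding simple_graph_def by (auto dest: symD)
lemma symE: "sym E" using sg unfolding simple_graph_def by auto
lemma E_irr: "(x,x) \<notin> E"
  using sg unfolding simple_graph_def irrefl_def by auto
lemma reach: "x < n \<Longrightarrow> y < n \<Longrightarrow> \<exists>k. (x,y) \<in> E^^k"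
  using conn unfolding connected_graph_def by (auto simp: rtrancl_power)
lemma dist_walk: "x < n \<Longrightarrow> y < n \<Longrightarrow> (x,y) \<in> E^^(dd x y)"
  unfolding sp_dist_def using reach by (metis LeastI_ex)
lemma dist_le: "(x,y) \<in> E^^k \<Longrightarrow> dd x y \<le> k"
  unfolding sp_dist_def by (rule Least_le)
lemma dist_sym: "x < n \<Longrightarrow> y < n \<Longrightarrow> dd x y = dd y x"
  by (meson antisym dist_le dist_walk relpow_sym symE)
lemma tri: "x < n \<Longrightarrow> y < n \<Longrightarrow> z < n \<Longrightarrow> dd x z \<le> dd x y + dd y z"
  by (meson dist_le dist_walk relpow_comp)
lemma dist_0: "dd x x = 0"
  using dist_le[of x x 0] by simp
lemma dist_eq0: "dd x y = 0 \<Longrightarrow> x < n \<Longrightarrow> y < n \<Longrightarrow> x = y"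
  using dist_walk[of x y] by simp
lemma adj_dist: "(x,y) \<in> E \<Longrightarrow> dd x y = 1"
proof -
  assume e: "(x,y) \<in> E"
  then have "dd x y \<le> 1" using dist_le[of x y 1] by simp
  moreover have "dd x y \<noteq> 0" using e E_irr E_sub dist_eq0 by blast
  ultimately show ?thesis by simp
qed
lemma dist1: "x < n \<Longrightarrow> y < n \<Longrightarrow> dd x y = 1 \<Longrightarrow> (x,y) \<in> E"
  using dist_walk[of x y] by simp
lemma lvl_adj: "(x,y) \<in> E \<Longrightarrow> lvl y \<le> lvl x + 1"
  unfolding lvl_def using tri[of 0 x y] adj_dist E_sub npos by fastforce
lemma lvl_adj2: "(x,y) \<in> E \<Longrightarrow> lvl x \<le> lvl y + 1"
  using lvl_adj E_sym by blast
lemma lvl0: "lvl x = 0 \<Longrightarrow> x < n \<Longrightarrow> x = 0"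
  unfolding lvl_def using dist_eq0 npos by metis
lemma lvl_zero: "lvl 0 = 0" unfolding lvl_def by (rule dist_0)
lemma parent: "x < n \<Longrightarrow> lvl x = Suc s \<Longrightarrow> \<exists>p. (x,p) \<in> E \<and> lvl p = s"
proof -
  assume x: "x < n" "lvl x = Suc s"
  then have "(0,x) \<in> E^^(Suc s)" using dist_walk[of 0 x] npos unfolding lvl_def by simp
  then obtain p where p: "(0,p) \<in> E^^s" "(p,x) \<in> E" by (auto elim!: relpow_Suc_E)
  then have "lvl p \<le> s" unfolding lvl_def using dist_le by blast
  moreover have "lvl x \<le> lvl p + 1" using lvl_adj p by blast
  ultimately show ?thesis using x p E_sym by (intro exI[of _ p]) auto
qed
lemma EB_mono: "k \<le> k' \<Longrightarrow> EB k \<subseteq> EB k'"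
  unfolding EB_def B_def by auto
lemma EB_E: "EB k \<subseteq> E" unfolding EB_def by auto
lemma down: "x < n \<Longrightarrow> lvl x = s \<Longrightarrow> (x,0) \<in> (EB s)^^s"
proof (induction s arbitrary: x)
  case 0 then show ?case using lvl0 by auto
next
  case (Suc s)
  then obtain p where p: "(x,p) \<in> E" "lvl p = s" using parent by blast
  then have "p < n" using E_sub by blast
  then have "(p,0) \<in> (EB s)^^s" using Suc p by blast
  then have "(p,0) \<in> (EB (Suc s))^^s" using relpow_mono_rel EB_mono by (metis le_SucI order_refl)
  moreover have "(x,p) \<in> EB (Suc s)" using p Suc \<open>p < n\<close> unfolding EB_def B_def by auto
  ultimately show ?case by (meson relpow_Suc_I2)
qed


lemma R_walk_exists:
  assumes "a < n" "b < n" "lvl a = Suc t" "lvl b = Suc t"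
    and R: "EB t \<subseteq> R" "sym R"
    and pa: "\<And>p. (a,p) \<in> E \<Longrightarrow> lvl p = t \<Longrightarrow> (a,p) \<in> R"
    and pb: "\<And>p. (b,p) \<in> E \<Longrightarrow> lvl p = t \<Longrightarrow> (b,p) \<in> R"
  shows "\<exists>k. (a,b) \<in> R^^k"
proof -
  obtain p where p: "(a,p) \<in> E" "lvl p = t" using parent assms by blast
  obtain q where q: "(b,q) \<in> E" "lvl q = t" using parent assms by blast
  have "(p,0) \<in> (EB t)^^t" using down p E_sub by blast
  then have "(p,0) \<in> R^^t" using relpow_mono_rel R by blast
  moreover have "(a,p) \<in> R" using pa p by blast
  ultimately have 1: "(a,0) \<in> R^^(Suc t)" by (meson relpow_Suc_I2)
  have "(q,0) \<in> (EB t)^^t" using down q E_sub by blast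
  then have "(q,0) \<in> R^^t" using relpow_mono_rel R by blast
  moreover have "(b,q) \<in> R" using pb q by blast
  ultimately have "(b,0) \<in> R^^(Suc t)" by (meson relpow_Suc_I2)
  then have "(0,b) \<in> R^^(Suc t)" using relpow_sym R by blast
  then show ?thesis using 1 relpow_comp by blast
qed

lemma lower_clique:
  assumes z: "z < n" "lvl z = Suc t" and ab: "(z,a) \<in> E" "(z,b) \<in> E" "lvl a = t" "lvl b = t" "a \<noteq> b"
  shows "(a,b) \<in> E"
proof (rule ccontr)
  assume nab: "(a,b) \<notin> E"
  have an: "a < n" "b < n" using ab E_sub by auto
  obtain t' where t': "t = Suc t'"
    using ab an lvl0 by (cases t) auto
  define W where "W = B t' \<union> {a,b}"
  define R where "R = E \<inter> (W \<times> W)"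
  have symR: "sym R" unfolding R_def sym_def using E_sym by auto
  have "EB t' \<subseteq> R" unfolding EB_def R_def W_def by auto
  have "\<exists>k. (a,b) \<in> R^^k"
    apply (rule R_walk_exists[of a b t'])
    using an ab t' \<open>EB t' \<subseteq> R\<close> symR E_sub unfolding R_def W_def B_def by auto
  define m where "m = (LEAST k. (a,b) \<in> R^^k)"
  have mw: "(a,b) \<in> R^^m" unfolding m_def using \<open>\<exists>k. _\<close> by (metis LeastI_ex)
  have msh: "\<forall>k<m. (a,b) \<notin> R^^k" unfolding m_def using not_less_Least by blast
  obtain f where f: "f 0 = a" "f m = b" "\<forall>i<m. (f i, f (Suc i)) \<in> R"
    using mw by (auto simp: relpow_fun_conv)
  have m0: "m \<noteq> 0"
  proof
    assume "m = 0" then have "a = b" using mw by simp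
    then show False using ab by simp
  qed
  have m1: "m \<noteq> 1" using mw nab unfolding R_def by auto
  have fW: "\<And>j. j \<le> m \<Longrightarrow> f j \<in> W"
  proof -
    fix j assume "j \<le> m"
    show "f j \<in> W"
    proof (cases "j = m")
      case True then show ?thesis using f unfolding W_def by auto
    next
      case False then show ?thesis using f \<open>j \<le> m\<close> unfolding R_def by auto
    qed
  qed
  have finj: "\<And>i j. i < j \<Longrightarrow> j \<le> m \<Longrightarrow> f i \<noteq> f j"
    using shortest_inj[of m f R] f msh by auto
  have finj': "\<And>i j. i \<le> m \<Longrightarrow> j \<le> m \<Longrightarrow> f i = f j \<Longrightarrow> i = j"
    using finj by (metis linorder_neqE_nat)
  have find: "\<And>i j. i+2 \<le> j \<Longrightarrow> j \<le> m \<Longrightarrow> (f i, f j) \<notin> R"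
    using shortest_induced[of m f R] f msh by auto
  have zadj: "\<And>k. k \<le> m \<Longrightarrow> (z, f k) \<in> E \<Longrightarrow> k = 0 \<or> k = m"
  proof -
    fix k assume k: "k \<le> m" "(z, f k) \<in> E"
    show "k = 0 \<or> k = m"
    proof (rule ccontr)
      assume "\<not> (k = 0 \<or> k = m)"
      then have "f k \<noteq> a" using finj' f k by (metis le0)
      moreover have "f k \<noteq> b" using finj' f k \<open>\<not> (k = 0 \<or> k = m)\<close> by (metis order_refl)
      ultimately have "f k \<noteq> a" "f k \<noteq> b" by auto
      then have "f k \<in> B t'" using fW k unfolding W_def by auto
      then have "lvl (f k) \<le> t'" unfolding B_def by auto
      moreover have "lvl z \<le> lvl (f k) + 1" using lvl_adj2 k by blast
      ultimately show False using z t' by simp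
    qed
  qed
  have zW: "z \<notin> W" using z ab t' unfolding W_def B_def by auto
  define cs where "cs = z # map f [0..<Suc m]"
  have len: "length cs = m + 2" unfolding cs_def by simp
  have cs0: "cs ! 0 = z" unfolding cs_def by simp
  have csS: "\<And>j. j \<le> m \<Longrightarrow> cs ! Suc j = f j" unfolding cs_def
    by (simp del: upt_Suc add: nth_map)
  have dist: "distinct cs"
  proof -
    have "distinct (map f [0..<Suc m])"
      unfolding distinct_map using finj' by (auto simp: inj_on_def)
    moreover have "z \<notin> set (map f [0..<Suc m])" using fW zW by auto
    ultimately show ?thesis unfolding cs_def by simp
  qed
  have RE: "\<And>x y. (x,y) \<in> R \<Longrightarrow> (x,y) \<in> E" unfolding R_def by auto
  have cyc: "\<forall>i<length cs. (cs!i, cs!((i+1) mod length cs)) \<in> E"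
  proof (intro allI impI)
    fix i assume i: "i < length cs"
    show "(cs!i, cs!((i+1) mod length cs)) \<in> E"
    proof (cases i)
      case 0 then show ?thesis using len cs0 csS[of 0] f ab m0 by simp
    next
      case (Suc j)
      show ?thesis
      proof (cases "j = m")
        case True
        then have "(i+1) mod length cs = 0" using Suc len by simp
        then show ?thesis using Suc True csS[of m] cs0 f ab E_sym by simp
      next
        case False
        then have "j < m" using i Suc len by simp
        then have "(i+1) mod length cs = Suc (Suc j)" using Suc len by simp
        then show ?thesis using Suc csS[of j] csS[of "Suc j"] \<open>j < m\<close> f RE by simp
      qed
    qed
  qed
  have chords: "\<forall>i<length cs. \<forall>j<length cs. (cs!i, cs!j) \<in> E \<longrightarrow> j = (i+1) mod length cs \<or> i = (j+1) mod length cs"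
  proof (intro allI impI)
    fix i j assume ij: "i < length cs" "j < length cs" "(cs!i, cs!j) \<in> E"
    show "j = (i+1) mod length cs \<or> i = (j+1) mod length cs"
    proof (cases i)
      case 0
      then have "j \<noteq> 0" using ij E_irr by (metis)
      then obtain k where k: "j = Suc k" by (cases j) auto
      then have "k \<le> m" using ij len by simp
      then have "(z, f k) \<in> E" using ij 0 k cs0 csS by simp
      then have "k = 0 \<or> k = m" using zadj \<open>k \<le> m\<close> by blast
      then show ?thesis using 0 k len by auto
    next
      case (Suc k1)
      then have k1: "k1 \<le> m" using ij len by simp
      show ?thesis
      proof (cases j)
        case 0
        then have "(z, f k1) \<in> E" using ij Suc cs0 csS k1 E_sym by simp
        then have "k1 = 0 \<or> k1 = m" using zadj k1 by blast
        then show ?thesis using 0 Suc len by auto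
      next
        case (Suc k2)
        then have k2: "k2 \<le> m" using ij len by simp
        have "(f k1, f k2) \<in> E" using ij \<open>i = Suc k1\<close> Suc csS k1 k2 by simp
        then have e: "(f k1, f k2) \<in> R" "(f k2, f k1) \<in> R"
          using fW k1 k2 E_sym unfolding R_def by auto
        have "\<not> k1 + 2 \<le> k2" using find e k2 by blast
        moreover have "\<not> k2 + 2 \<le> k1" using find e k1 by blast
        moreover have "k1 \<noteq> k2" using e RE E_irr by auto
        ultimately have "k2 = k1 + 1 \<or> k1 = k2 + 1" by linarith
        then show ?thesis using \<open>i = Suc k1\<close> Suc len k1 k2 by auto
      qed
    qed
  qed
  have "length cs \<ge> 4" using len m0 m1 by simp
  then show False using no_induced_cycle[OF ch dist _ cyc chords] by simp
qed


lemma common_parent: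
  assumes z: "z1 < n" "z2 < n" "lvl z1 = Suc t" "lvl z2 = Suc t" "(z1,z2) \<in> E"
  shows "\<exists>c. (z1,c) \<in> E \<and> (z2,c) \<in> E \<and> lvl c = t"
proof (rule ccontr)
  assume noc: "\<not> (\<exists>c. (z1,c) \<in> E \<and> (z2,c) \<in> E \<and> lvl c = t)"
  have z12: "z1 \<noteq> z2" using z E_irr by auto
  define W where "W = B t \<union> {z1,z2}"
  define R where "R = E \<inter> (W \<times> W) - {(z1,z2),(z2,z1)}"
  have symR: "sym R" unfolding R_def sym_def using E_sym by auto
  have "EB t \<subseteq> R" unfolding EB_def R_def W_def B_def using z by auto
  have "\<exists>k. (z1,z2) \<in> R^^k"
    apply (rule R_walk_exists[of z1 z2 t])
    using z \<open>EB t \<subseteq> R\<close> symR E_sub unfolding R_def W_def B_def by auto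
  define m where "m = (LEAST k. (z1,z2) \<in> R^^k)"
  have mw: "(z1,z2) \<in> R^^m" unfolding m_def using \<open>\<exists>k. _\<close> by (metis LeastI_ex)
  have msh: "\<forall>k<m. (z1,z2) \<notin> R^^k" unfolding m_def using not_less_Least by blast
  obtain f where f: "f 0 = z1" "f m = z2" "\<forall>i<m. (f i, f (Suc i)) \<in> R"
    using mw by (auto simp: relpow_fun_conv)
  have RE: "\<And>x y. (x,y) \<in> R \<Longrightarrow> (x,y) \<in> E" unfolding R_def by auto
  have m0: "m \<noteq> 0"
  proof
    assume "m = 0" then have "z1 = z2" using mw by simp
    then show False using z12 by simp
  qed
  have m1: "m \<noteq> 1" using mw unfolding R_def by auto
  have fW: "\<And>j. j \<le> m \<Longrightarrow> f j \<in> W"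
  proof -
    fix j assume "j \<le> m"
    show "f j \<in> W"
    proof (cases "j = m")
      case True then show ?thesis using f unfolding W_def by auto
    next
      case False then show ?thesis using f \<open>j \<le> m\<close> unfolding R_def by auto
    qed
  qed
  have finj: "\<And>i j. i < j \<Longrightarrow> j \<le> m \<Longrightarrow> f i \<noteq> f j"
    using shortest_inj[of m f R] f msh by auto
  have finj': "\<And>i j. i \<le> m \<Longrightarrow> j \<le> m \<Longrightarrow> f i = f j \<Longrightarrow> i = j"
    using finj by (metis linorder_neqE_nat)
  have find: "\<And>i j. i+2 \<le> j \<Longrightarrow> j \<le> m \<Longrightarrow> (f i, f j) \<notin> R"
    using shortest_induced[of m f R] f msh by auto
  have m2: "m \<noteq> 2"
  proof
    assume m2: "m = 2"
    have e1: "(z1, f 1) \<in> E" using f m2 RE by (metis One_nat_def lessI pos2)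
    have e2: "(f 1, z2) \<in> E" using f m2 RE by (metis One_nat_def lessI numeral_2_eq_2)
    have "f 1 \<noteq> z1" using finj'[of 1 0] f m2 by auto
    moreover have "f 1 \<noteq> z2" using finj'[of 1 2] f m2 by auto
    ultimately have "f 1 \<in> B t" using fW[of 1] m2 unfolding W_def by auto
    then have "lvl (f 1) \<le> t" unfolding B_def by auto
    moreover have "lvl z1 \<le> lvl (f 1) + 1" using lvl_adj2 e1 by blast
    ultimately have "lvl (f 1) = t" using z by simp
    then show False using noc e1 e2 E_sym by blast
  qed
  define cs where "cs = map f [0..<Suc m]"
  have len: "length cs = m + 1" unfolding cs_def by simp
  have csj: "\<And>j. j \<le> m \<Longrightarrow> cs ! j = f j" unfolding cs_def
    by (simp del: upt_Suc add: nth_map)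
  have dist: "distinct cs"
    unfolding cs_def distinct_map using finj' by (auto simp: inj_on_def)
  have cyc: "\<forall>i<length cs. (cs!i, cs!((i+1) mod length cs)) \<in> E"
  proof (intro allI impI)
    fix i assume i: "i < length cs"
    show "(cs!i, cs!((i+1) mod length cs)) \<in> E"
    proof (cases "i = m")
      case True
      then have "(i+1) mod length cs = 0" using len by simp
      then show ?thesis using True csj[of m] csj[of 0] f z E_sym by simp
    next
      case False
      then have "i < m" using i len by simp
      then have "(i+1) mod length cs = Suc i" using len by simp
      then show ?thesis using csj[of i] csj[of "Suc i"] \<open>i < m\<close> f RE by simp
    qed
  qed
  have chords: "\<forall>i<length cs. \<forall>j<length cs. (cs!i, cs!j) \<in> E \<longrightarrow> j = (i+1) mod length cs \<or> i = (j+1) mod length cs"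
  proof (intro allI impI)
    fix i j assume ij: "i < length cs" "j < length cs" "(cs!i, cs!j) \<in> E"
    have im: "i \<le> m" "j \<le> m" using ij len by auto
    have e: "(f i, f j) \<in> E" using ij csj im by simp
    show "j = (i+1) mod length cs \<or> i = (j+1) mod length cs"
    proof (cases "(f i, f j) \<in> R")
      case True
      then have e: "(f i, f j) \<in> R" "(f j, f i) \<in> R" using symR by (auto dest: symD)
      have "\<not> i + 2 \<le> j" using find e im by blast
      moreover have "\<not> j + 2 \<le> i" using find e im by blast
      moreover have "i \<noteq> j" using e RE E_irr by auto
      ultimately have "j = i + 1 \<or> i = j + 1" by linarith
      then show ?thesis using len im by auto
    next
      case False
      then have "(f i, f j) = (z1,z2) \<or> (f i, f j) = (z2,z1)"
        using e fW im unfolding R_def by auto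
      then have "(i = 0 \<and> j = m) \<or> (i = m \<and> j = 0)"
        using finj' f im by (metis le0 order_refl prod.inject)
      then show ?thesis using len by auto
    qed
  qed
  have "length cs \<ge> 4" using len m0 m1 m2 by simp
  then show False using no_induced_cycle[OF ch dist _ cyc chords] by simp
qed


lemma clique_step:
  assumes "z < n" "lvl z = Suc t" "(z,a) \<in> E" "(z,b) \<in> E" "lvl a = t" "lvl b = t"
    "(b,w) \<in> (EB t)^^k"
  shows "\<exists>k'\<le>k+1. (a,w) \<in> (EB t)^^k'"
proof (cases "a = b")
  case True
  then have "(a,w) \<in> (EB t)^^k" using assms(7) by simp
  moreover have "k \<le> k+1" by simp
  ultimately show ?thesis by blast
next
  case False
  then have "(a,b) \<in> E" using lower_clique assms by blast
  then have "(a,b) \<in> EB t" using assms E_sub unfolding EB_def B_def by auto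
  then have "(a,w) \<in> (EB t)^^(Suc k)" using assms by (meson relpow_Suc_I2)
  moreover have "Suc k \<le> k+1" by simp
  ultimately show ?thesis by blast
qed

lemma run_one:
  assumes "\<forall>j\<le>l. g j < n \<and> lvl (g j) = Suc t" "\<forall>j<l. (g j, g (Suc j)) \<in> E"
    "(g l, w) \<in> E" "lvl w = t"
  shows "\<exists>p. (g 0, p) \<in> E \<and> lvl p = t \<and> (\<exists>k\<le>l. (p,w) \<in> (EB t)^^k)"
  using assms
proof (induction l arbitrary: g)
  case 0 then show ?case by (intro exI[of _ w]) auto
next
  case (Suc l)
  define g' where "g' = (\<lambda>j. g (Suc j))"
  have "\<exists>p. (g' 0, p) \<in> E \<and> lvl p = t \<and> (\<exists>k\<le>l. (p,w) \<in> (EB t)^^k)"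
    apply (rule Suc.IH) using Suc.prems unfolding g'_def by auto
  then obtain p' k where p': "(g 1, p') \<in> E" "lvl p' = t" "k \<le> l" "(p',w) \<in> (EB t)^^k"
    unfolding g'_def by auto
  obtain c where c: "(g 0, c) \<in> E" "(g 1, c) \<in> E" "lvl c = t"
    using common_parent[of "g 0" "g 1" t] Suc.prems by auto
  obtain k' where "k' \<le> k+1" "(c,w) \<in> (EB t)^^k'"
    using clique_step[of "g 1" t c p' w k] Suc.prems c p' by auto
  moreover have "k' \<le> Suc l" using \<open>k' \<le> k+1\<close> \<open>k \<le> l\<close> by simp
  ultimately show ?case using c by blast
qed

lemma run_two:
  assumes "\<forall>j\<le>l. g j < n \<and> lvl (g j) = Suc t" "\<forall>j<l. (g j, g (Suc j)) \<in> E"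
    "(g l, w) \<in> E" "lvl w = t" "(g 0, u) \<in> E" "lvl u = t"
  shows "\<exists>k\<le>l+1. (u,w) \<in> (EB t)^^k"
proof -
  obtain p k where p: "(g 0, p) \<in> E" "lvl p = t" "k \<le> l" "(p,w) \<in> (EB t)^^k"
    using run_one[OF assms(1-4)] by auto
  obtain k' where "k' \<le> k+1" "(u,w) \<in> (EB t)^^k'"
    using clique_step[of "g 0" t u p w k] assms p by auto
  then show ?thesis using p by (intro exI[of _ k']) auto
qed

lemma conv:
  "(x,y) \<in> E^^l \<Longrightarrow> x < n \<Longrightarrow> y < n \<Longrightarrow> lvl x \<le> k \<Longrightarrow> lvl y \<le> k \<Longrightarrow> \<exists>j\<le>l. (x,y) \<in> (EB k)^^j"
proof (induction l arbitrary: x y k rule: less_induct)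
  case (less l)
  show ?case
  proof (cases l)
    case 0
    then have "x = y" using less.prems(1) by simp
    then show ?thesis by (intro exI[of _ 0]) simp
  next
    case (Suc l')
    have "(x,y) \<in> E^^(Suc l')" using less.prems(1) Suc by (simp only:)
    then have "\<exists>x1. (x,x1) \<in> E \<and> (x1,y) \<in> E^^l'" by (rule relpow_Suc_D2)
    then obtain x1 where x1: "(x,x1) \<in> E" "(x1,y) \<in> E^^l'" by blast
    have x1n: "x1 < n" using x1 E_sub by blast
    show ?thesis
    proof (cases "lvl x1 \<le> k")
      case True
      have "\<exists>j\<le>l'. (x1,y) \<in> (EB k)^^j" by (rule less.IH) (use Suc x1 x1n less.prems True in auto)
      then obtain j where "j \<le> l'" "(x1,y) \<in> (EB k)^^j" by blast
      moreover have "(x,x1) \<in> EB k" using True x1 x1n less.prems unfolding EB_def B_def by auto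
      ultimately show ?thesis using Suc by (meson Suc_le_mono relpow_Suc_I2)
    next
      case False
      then have lx1: "lvl x1 = Suc k" "lvl x = k" using lvl_adj[OF x1(1)] lvl_adj2[OF x1(1)] less.prems by auto
      have "\<exists>j\<le>l'. (x1,y) \<in> (EB (Suc k))^^j" by (rule less.IH) (use Suc x1 x1n less.prems lx1 in auto)
      then obtain j where j: "j \<le> l'" "(x1,y) \<in> (EB (Suc k))^^j" by blast
      then obtain g where g: "g 0 = x1" "g j = y" "\<forall>i<j. (g i, g (Suc i)) \<in> EB (Suc k)"
        by (auto simp: relpow_fun_conv)
      have gB: "\<And>i. i \<le> j \<Longrightarrow> g i < n \<and> lvl (g i) \<le> Suc k"
      proof -
        fix i assume "i \<le> j"
        then show "g i < n \<and> lvl (g i) \<le> Suc k"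
        proof (cases "i = j")
          case True then show ?thesis using g less.prems by auto
        next
          case False then show ?thesis using g \<open>i \<le> j\<close> unfolding EB_def B_def by auto
        qed
      qed
      have ex: "\<exists>i. lvl (g i) \<le> k" using g less.prems by auto
      define q where "q = (LEAST i. lvl (g i) \<le> k)"
      have q1: "lvl (g q) \<le> k" unfolding q_def using ex by (rule LeastI_ex)
      have q2: "\<And>i. i < q \<Longrightarrow> \<not> lvl (g i) \<le> k" unfolding q_def using not_less_Least by blast
      have qj: "q \<le> j" unfolding q_def by (rule Least_le) (use g less.prems in simp)
      have q0: "q \<noteq> 0"
      proof
        assume "q = 0" then have "lvl x1 \<le> k" using q1 g by simp
        then show False using lx1 by simp
      qed
      then obtain q' where q': "q = Suc q'" by (cases q) auto
      have run: "\<forall>i\<le>q'. g i < n \<and> lvl (g i) = Suc k"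
      proof (intro allI impI)
        fix i assume i: "i \<le> q'"
        then have "i \<le> j" "i < q" using q' qj by auto
        then show "g i < n \<and> lvl (g i) = Suc k" using gB[of i] q2[of i] by auto
      qed
      have runE: "\<forall>i<q'. (g i, g (Suc i)) \<in> E"
      proof (intro allI impI)
        fix i assume "i < q'"
        then have "i < j" using q' qj by simp
        then have "(g i, g (Suc i)) \<in> EB (Suc k)" using g(3) by blast
        then show "(g i, g (Suc i)) \<in> E" using EB_E by blast
      qed
      have "(g q', g (Suc q')) \<in> EB (Suc k)" using g(3) q' qj by simp
      then have eq: "(g q', g q) \<in> E" using EB_E q' by blast
      have lq: "lvl (g q) = k" using q1 lvl_adj2[OF eq] run by auto
      have "(g 0, x) \<in> E" using x1 g E_sym by simp
      then obtain k1 where k1: "k1 \<le> q'+1" "(x, g q) \<in> (EB k)^^k1"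
        using run_two[of q' g k "g q" x] run runE eq lq q' lx1 by auto
      have "(g q, y) \<in> (EB (Suc k))^^(j - q)"
        using walk_seg[of q j g "EB (Suc k)"] g qj by auto
      then have "(g q, y) \<in> E^^(j - q)" using relpow_mono_rel EB_E by blast
      moreover have "j - q < l" using Suc j q' qj by simp
      moreover have "g q < n" using gB qj by blast
      ultimately have "\<exists>k2\<le>j-q. (g q, y) \<in> (EB k)^^k2" using less.prems lq by (intro less.IH) auto
      then obtain k2 where k2: "k2 \<le> j - q" "(g q, y) \<in> (EB k)^^k2" by blast
      have "(x,y) \<in> (EB k)^^(k1+k2)" using k1 k2 relpow_comp by blast
      moreover have "k1 + k2 \<le> l" using k1 k2 q' qj j Suc by simp
      ultimately show ?thesis by blast
    qed
  qed
qed


lemma dist_B: "x \<in> B k \<Longrightarrow> y \<in> B k \<Longrightarrow> sp_dist (EB k) x y = dd x y"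
proof -
  assume xy: "x \<in> B k" "y \<in> B k"
  then have n: "x < n" "y < n" "lvl x \<le> k" "lvl y \<le> k" unfolding B_def by auto
  obtain j where j: "j \<le> dd x y" "(x,y) \<in> (EB k)^^j" using conv[OF dist_walk[OF n(1,2)] n] by blast
  then have 1: "sp_dist (EB k) x y \<le> dd x y" unfolding sp_dist_def by (meson Least_le le_trans)
  have "(x,y) \<in> (EB k)^^(sp_dist (EB k) x y)" unfolding sp_dist_def using j(2) by (meson LeastI)
  then have "(x,y) \<in> E^^(sp_dist (EB k) x y)" using relpow_mono_rel EB_E by blast
  then have "dd x y \<le> sp_dist (EB k) x y" by (rule dist_le)
  then show ?thesis using 1 by simp
qed

lemma geo_step:
  assumes "x \<in> B k" "y \<in> B k" "dd x y = Suc D"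
  shows "\<exists>x'. (x,x') \<in> EB k \<and> dd x' y = D"
proof -
  have n: "x < n" "y < n" "lvl x \<le> k" "lvl y \<le> k" using assms unfolding B_def by auto
  obtain j where j: "j \<le> dd x y" "(x,y) \<in> (EB k)^^j" using conv[OF dist_walk[OF n(1,2)] n] by blast
  have "(x,y) \<in> E^^j" using j relpow_mono_rel EB_E by blast
  then have "dd x y \<le> j" by (rule dist_le)
  then have "j = Suc D" using j assms by simp
  then have "(x,y) \<in> (EB k)^^(Suc D)" using j(2) by simp
  then have "\<exists>x'. (x,x') \<in> EB k \<and> (x',y) \<in> (EB k)^^D" by (rule relpow_Suc_D2)
  then obtain x' where x': "(x,x') \<in> EB k" "(x',y) \<in> (EB k)^^D" by blast
  then have "(x',y) \<in> E^^D" using relpow_mono_rel EB_E by blast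
  then have 1: "dd x' y \<le> D" by (rule dist_le)
  have x'n: "x' < n" using x' EB_E E_sub by blast
  have "dd x y \<le> dd x x' + dd x' y" using tri[OF n(1) x'n n(2)] .
  moreover have "dd x x' = 1" using x' EB_E adj_dist by blast
  ultimately have "D \<le> dd x' y" using assms by simp
  then show ?thesis using 1 x' by (intro exI[of _ x']) auto
qed

lemma lip: "(m,x) \<in> E \<Longrightarrow> q < n \<Longrightarrow> dd x q \<le> dd m q + 1"
proof -
  assume e: "(m,x) \<in> E" "q < n"
  then have "m < n" "x < n" using E_sub by auto
  then have "dd x q \<le> dd x m + dd m q" using tri[of x m q] e by simp
  moreover have "dd x m = 1" using e E_sym adj_dist by blast
  ultimately show ?thesis by simp
qed

lemma second_vertex:
  assumes v: "v < n" "lvl v = Suc t" and y: "y < n" "lvl y \<le> t"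
  shows "\<exists>p. (v,p) \<in> E \<and> lvl p = t \<and> dd v y = Suc (dd p y)"
proof -
  have vB: "lvl v \<le> Suc t" "lvl y \<le> Suc t" using v y by auto
  obtain j where j: "j \<le> dd v y" "(v,y) \<in> (EB (Suc t))^^j" using conv[OF dist_walk[OF v(1) y(1)] v(1) y(1) vB] by blast
  then obtain g where g: "g 0 = v" "g j = y" "\<forall>i<j. (g i, g (Suc i)) \<in> EB (Suc t)"
    by (auto simp: relpow_fun_conv)
  have gB: "\<And>i. i \<le> j \<Longrightarrow> g i < n \<and> lvl (g i) \<le> Suc t"
  proof -
    fix i assume "i \<le> j"
    then show "g i < n \<and> lvl (g i) \<le> Suc t"
    proof (cases "i = j")
      case True then show ?thesis using g y by auto
    next
      case False then show ?thesis using g \<open>i \<le> j\<close> unfolding EB_def B_def by auto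
    qed
  qed
  have ex: "\<exists>i. lvl (g i) \<le> t" using g y by auto
  define q where "q = (LEAST i. lvl (g i) \<le> t)"
  have q1: "lvl (g q) \<le> t" unfolding q_def using ex by (rule LeastI_ex)
  have q2: "\<And>i. i < q \<Longrightarrow> \<not> lvl (g i) \<le> t" unfolding q_def using not_less_Least by blast
  have qj: "q \<le> j" unfolding q_def by (rule Least_le) (use g y in simp)
  have q0: "q \<noteq> 0"
  proof
    assume "q = 0" then have "lvl v \<le> t" using q1 g by simp
    then show False using v by simp
  qed
  then obtain q' where q': "q = Suc q'" by (cases q) auto
  have run: "\<forall>i\<le>q'. g i < n \<and> lvl (g i) = Suc t"
  proof (intro allI impI)
    fix i assume i: "i \<le> q'"
    then have "i \<le> j" "i < q" using q' qj by auto
    then show "g i < n \<and> lvl (g i) = Suc t" using gB[of i] q2[of i] by auto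
  qed
  have runE: "\<forall>i<q'. (g i, g (Suc i)) \<in> E"
  proof (intro allI impI)
    fix i assume "i < q'"
    then have "i < j" using q' qj by simp
    then have "(g i, g (Suc i)) \<in> EB (Suc t)" using g(3) by blast
    then show "(g i, g (Suc i)) \<in> E" using EB_E by blast
  qed
  have "(g q', g (Suc q')) \<in> EB (Suc t)" using g(3) q' qj by simp
  then have eq: "(g q', g q) \<in> E" using EB_E q' by blast
  have lq: "lvl (g q) = t" using q1 lvl_adj2[OF eq] run by auto
  obtain p k1 where p: "(g 0, p) \<in> E" "lvl p = t" "k1 \<le> q'" "(p, g q) \<in> (EB t)^^k1"
    using run_one[of q' g t "g q"] run runE eq lq by blast
  have "(g q, y) \<in> (EB (Suc t))^^(j - q)"
    using walk_seg[of q j g "EB (Suc t)"] g qj by auto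
  then have "(g q, y) \<in> E^^(j - q)" using relpow_mono_rel EB_E by blast
  moreover have "(p, g q) \<in> E^^k1" using p relpow_mono_rel EB_E by blast
  ultimately have "(p, y) \<in> E^^(k1 + (j-q))" using relpow_comp by blast
  then have 1: "dd p y \<le> k1 + (j - q)" by (rule dist_le)
  have pn: "p < n" using p E_sub by blast
  have "dd v y \<le> dd v p + dd p y" using tri[OF v(1) pn y(1)] .
  moreover have "dd v p = 1" using p g adj_dist by simp
  ultimately have "dd v y = Suc (dd p y)" using 1 j p(3) q' qj by linarith
  then show ?thesis using p g by blast
qed
end




datatype 'a prog = Ret 'a | Qry nat nat "nat \<Rightarrow> 'a prog"

primrec bindp :: "'a prog \<Rightarrow> ('a \<Rightarrow> 'b prog) \<Rightarrow> 'b prog" where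
  "bindp (Ret a) f = f a"
| "bindp (Qry u v k) f = Qry u v (\<lambda>x. bindp (k x) f)"

primrec res :: "'a prog \<Rightarrow> (nat \<Rightarrow> nat \<Rightarrow> nat) \<Rightarrow> 'a" where
  "res (Ret a) d = a"
| "res (Qry u v k) d = res (k (d u v)) d"

primrec cost :: "'a prog \<Rightarrow> (nat \<Rightarrow> nat \<Rightarrow> nat) \<Rightarrow> nat" where
  "cost (Ret a) d = 0"
| "cost (Qry u v k) d = Suc (cost (k (d u v)) d)"

primrec answers :: "'a prog \<Rightarrow> (nat \<Rightarrow> nat \<Rightarrow> nat) \<Rightarrow> nat list" where
  "answers (Ret a) d = []"
| "answers (Qry u v k) d = d u v # answers (k (d u v)) d"

primrec stepp :: "(nat \<times> nat) set prog \<Rightarrow> nat list \<Rightarrow> action" where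
  "stepp (Ret F) hs = Answer F"
| "stepp (Qry u v k) hs = (case hs of [] \<Rightarrow> Ask u v | a # hs' \<Rightarrow> stepp (k a) hs')"

lemma res_bind[simp]: "res (bindp p f) d = res (f (res p d)) d"
  by (induction p) auto
lemma cost_bind[simp]: "cost (bindp p f) d = cost p d + cost (f (res p d)) d"
  by (induction p) auto

lemma len_answers: "length (answers p d) = cost p d"
  by (induction p) auto

lemma step_final: "stepp p (answers p d) = Answer (res p d)"
  by (induction p) auto

lemma step_mid: "i < cost p d \<Longrightarrow> \<exists>u v. stepp p (take i (answers p d)) = Ask u v \<and> answers p d ! i = d u v"
proof (induction p arbitrary: i)
  case (Ret x) then show ?case by simp
next
  case (Qry u v k)
  show ?case
  proof (cases i)
    case 0 then show ?thesis by simp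
  next
    case (Suc j)
    then have "j < cost (k (d u v)) d" using Qry.prems by simp
    then show ?thesis using Qry.IH[OF rangeI, of j "d u v"] Suc by simp
  qed
qed

definition strat :: "(nat \<Rightarrow> nat \<Rightarrow> (nat \<times> nat) set prog) \<Rightarrow> strategy" where
  "strat P = (\<lambda>n \<Delta> \<omega> hs. stepp (P n \<Delta>) hs)"

lemma history_eq:
  "i \<le> cost (P n \<Delta>) d \<Longrightarrow> history (strat P) n \<Delta> d \<omega> i = take i (answers (P n \<Delta>) d)"
proof (induction i)
  case 0 then show ?case by simp
next
  case (Suc i)
  then have i: "i < cost (P n \<Delta>) d" by simp
  obtain u v where uv: "stepp (P n \<Delta>) (take i (answers (P n \<Delta>) d)) = Ask u v"
      "answers (P n \<Delta>) d ! i = d u v"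
    using step_mid[OF i] by blast
  have "history (strat P) n \<Delta> d \<omega> (Suc i) = take i (answers (P n \<Delta>) d) @ [d u v]"
    using Suc i uv by (simp add: strat_def)
  also have "\<dots> = take (Suc i) (answers (P n \<Delta>) d)"
    using uv i len_answers by (metis take_Suc_conv_app_nth)
  finally show ?case .
qed

lemma strat_run:
  "halts (strat P) n \<Delta> d \<omega> \<and> num_queries (strat P) n \<Delta> d \<omega> = cost (P n \<Delta>) d
   \<and> run_output (strat P) n \<Delta> d \<omega> = res (P n \<Delta>) d"
proof -
  let ?c = "cost (P n \<Delta>) d"
  have h: "history (strat P) n \<Delta> d \<omega> ?c = answers (P n \<Delta>) d"
    using history_eq[of ?c P n \<Delta> d \<omega>] len_answers by (metis order_refl take_all)
  have ans: "strat P n \<Delta> \<omega> (history (strat P) n \<Delta> d \<omega> ?c) = Answer (res (P n \<Delta>) d)"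
    using h step_final by (simp add: strat_def)
  have notans: "\<And>i. i < ?c \<Longrightarrow> \<not> is_answer (strat P n \<Delta> \<omega> (history (strat P) n \<Delta> d \<omega> i))"
  proof -
    fix i assume i: "i < ?c"
    then obtain u v where "stepp (P n \<Delta>) (take i (answers (P n \<Delta>) d)) = Ask u v"
      using step_mid by blast
    then show "\<not> is_answer (strat P n \<Delta> \<omega> (history (strat P) n \<Delta> d \<omega> i))"
      using history_eq[of i P n \<Delta> d \<omega>] i by (simp add: strat_def is_answer_def)
  qed
  have isa: "is_answer (strat P n \<Delta> \<omega> (history (strat P) n \<Delta> d \<omega> ?c))"
    using ans by (simp add: is_answer_def)
  have nq: "num_queries (strat P) n \<Delta> d \<omega> = ?c"
    unfolding num_queries_def
  proof (rule Least_equality)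
    show "is_answer (strat P n \<Delta> \<omega> (history (strat P) n \<Delta> d \<omega> ?c))" by (rule isa)
  next
    fix y assume "is_answer (strat P n \<Delta> \<omega> (history (strat P) n \<Delta> d \<omega> y))"
    then show "?c \<le> y" using notans by (meson not_le)
  qed
  have "halts (strat P) n \<Delta> d \<omega>" unfolding halts_def using isa by blast
  moreover have "run_output (strat P) n \<Delta> d \<omega> = res (P n \<Delta>) d"
    unfolding run_output_def using nq ans by simp
  ultimately show ?thesis using nq by blast
qed

primrec forM :: "'a list \<Rightarrow> ('a \<Rightarrow> 'b prog) \<Rightarrow> 'b list prog" where
  "forM [] f = Ret []"
| "forM (x # xs) f = bindp (f x) (\<lambda>b. bindp (forM xs f) (\<lambda>bs. Ret (b # bs)))"

lemma res_forM[simp]: "res (forM xs f) d = map (\<lambda>x. res (f x) d) xs"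
  by (induction xs) auto
lemma cost_forM[simp]: "cost (forM xs f) d = sum_list (map (\<lambda>x. cost (f x) d) xs)"
  by (induction xs) auto

primrec foldM :: "'a list \<Rightarrow> ('a \<Rightarrow> 's \<Rightarrow> 's prog) \<Rightarrow> 's \<Rightarrow> 's prog" where
  "foldM [] f s = Ret s"
| "foldM (x # xs) f s = bindp (f x s) (\<lambda>s'. foldM xs f s')"

definition qry :: "nat \<Rightarrow> nat \<Rightarrow> nat prog" where "qry u v = Qry u v Ret"
lemma res_qry[simp]: "res (qry u v) d = d u v" by (simp add: qry_def)
lemma cost_qry[simp]: "cost (qry u v) d = 1" by (simp add: qry_def)




definition dsetF :: "(nat \<times> nat) set \<Rightarrow> nat \<Rightarrow> nat set \<Rightarrow> nat" where
  "dsetF F y Q = Min ((\<lambda>q. sp_dist F y q) ` Q)"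

definition score :: "(nat \<times> nat) set \<Rightarrow> nat set set \<Rightarrow> nat \<Rightarrow> nat" where
  "score F S m = (\<Sum>Q\<in>S. dsetF F m Q)"

definition median :: "(nat \<times> nat) set \<Rightarrow> nat set \<Rightarrow> nat set set \<Rightarrow> nat" where
  "median F Bs S = (SOME m. m \<in> Bs \<and> (\<forall>y\<in>Bs. score F S m \<le> score F S y))"

definition nbh :: "(nat \<times> nat) set \<Rightarrow> nat \<Rightarrow> nat list" where
  "nbh F m = sorted_list_of_set (insert m {y. (m,y) \<in> F})"

definition filt :: "(nat \<times> nat) set \<Rightarrow> nat list \<Rightarrow> nat list \<Rightarrow> nat set set \<Rightarrow> nat set set" where
  "filt F ys ds S = {Q \<in> S. list_all2 (\<lambda>y a. Suc (dsetF F y Q) = a) ys ds}"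

primrec search :: "nat \<Rightarrow> (nat \<times> nat) set \<Rightarrow> nat set \<Rightarrow> nat \<Rightarrow> nat set set \<Rightarrow> nat set set prog" where
  "search 0 F Bs v S = Ret S"
| "search (Suc r) F Bs v S = (if card S \<le> 1 then Ret S else
     bindp (forM (nbh F (median F Bs S)) (\<lambda>y. qry v y))
       (\<lambda>ds. search r F Bs v (filt F (nbh F (median F Bs S)) ds S)))"

definition cands :: "(nat \<Rightarrow> nat) \<Rightarrow> nat \<Rightarrow> nat \<Rightarrow> nat \<Rightarrow> (nat \<times> nat) set \<Rightarrow> nat set set" where
  "cands lv n \<Delta> t F = {Q. Q \<subseteq> {v. v < n \<and> lv v = t} \<and> Q \<noteq> {} \<and> card Q \<le> \<Delta> \<and>
      (\<forall>a\<in>Q. \<forall>b\<in>Q. a \<noteq> b \<longrightarrow> (a,b) \<in> F)}"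

definition clog :: "nat \<Rightarrow> nat" where "clog n = (LEAST k. n + 1 \<le> 2^k)"

definition prs :: "(nat \<times> nat set) list \<Rightarrow> (nat \<times> nat) list" where
  "prs rs = concat (map (\<lambda>a. map (\<lambda>b. (fst a, fst b)) (filter (\<lambda>b. fst a \<noteq> fst b \<and> snd a \<inter> snd b \<noteq> {}) rs)) rs)"

definition pedges :: "(nat \<times> nat set) list \<Rightarrow> (nat \<times> nat) set" where
  "pedges rs = (\<Union>a\<in>set rs. ({fst a} \<times> snd a) \<union> (snd a \<times> {fst a}))"

definition chk :: "nat \<times> nat \<Rightarrow> (nat \<times> nat) set prog" where
  "chk p = bindp (qry (fst p) (snd p)) (\<lambda>a. Ret (if a = 1 then {p} else {}))"

definition procLevel :: "nat \<Rightarrow> nat \<Rightarrow> (nat \<Rightarrow> nat) \<Rightarrow> nat \<Rightarrow> (nat \<times> nat) set \<Rightarrow> (nat \<times> nat) set prog" where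
  "procLevel n \<Delta> lv t F =
     bindp (forM (sorted_list_of_set {v. v < n \<and> lv v = Suc t})
              (\<lambda>v. bindp (search (\<Delta> * clog n) F {v. v < n \<and> lv v \<le> t} v (cands lv n \<Delta> t F))
                          (\<lambda>S. Ret (v, \<Union>S))))
       (\<lambda>rs. bindp (forM (prs rs) chk) (\<lambda>es. Ret (F \<union> pedges rs \<union> \<Union>(set es))))"

definition mainp :: "nat \<Rightarrow> nat \<Rightarrow> (nat \<times> nat) set prog" where
  "mainp n \<Delta> = (if n \<le> 1 then Ret {} else
     bindp (forM [0..<n] (\<lambda>v. qry 0 v))
       (\<lambda>ls. foldM [0..<n-1] (\<lambda>t F. procLevel n \<Delta> (\<lambda>v. ls ! v) t F) {}))"




lemma choose_le_pow': "(N::nat) choose s \<le> N ^ s"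
  by (cases "s \<le> N") (auto simp: binomial_le_pow binomial_eq_0)

lemma count_subsets:
  assumes "finite A"
  shows "card {Q. Q \<subseteq> A \<and> card Q \<le> k} \<le> (card A + 1)^k"
proof -
  have eq: "{Q. Q \<subseteq> A \<and> card Q \<le> k} = (\<Union>s\<in>{..k}. {Q. Q \<subseteq> A \<and> card Q = s})" by auto
  have "card {Q. Q \<subseteq> A \<and> card Q \<le> k} \<le> (\<Sum>s\<in>{..k}. card {Q. Q \<subseteq> A \<and> card Q = s})"
    unfolding eq by (rule card_UN_le) simp
  also have "\<dots> = (\<Sum>s\<in>{..k}. card A choose s)" using n_subsets[OF assms] by simp
  also have "\<dots> \<le> (\<Sum>s\<in>{..k}. (k choose s) * card A ^ s * 1^(k-s))"
  proof (rule sum_mono)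
    fix s assume "s \<in> {..k}"
    then have "1 \<le> k choose s" by (simp add: Suc_leI)
    then have "1 * card A ^ s \<le> (k choose s) * card A ^ s" by (rule mult_le_mono1)
    then have "card A choose s \<le> (k choose s) * card A ^ s"
      using choose_le_pow'[of "card A" s] by linarith
    then show "card A choose s \<le> (k choose s) * card A ^ s * 1^(k-s)" by simp
  qed
  also have "\<dots> = (card A + 1)^k" using binomial[of "card A" 1 k] by simp
  finally show ?thesis .
qed


lemma procLevel_cong:
  assumes "\<forall>v<n. lv v = lv' v"
  shows "procLevel n \<Delta> lv t F = procLevel n \<Delta> lv' t F"
proof -
  have 1: "{v. v < n \<and> lv v = Suc t} = {v. v < n \<and> lv' v = Suc t}" using assms by auto
  have 2: "{v. v < n \<and> lv v \<le> t} = {v. v < n \<and> lv' v \<le> t}" using assms by auto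
  have 3: "{v. v < n \<and> lv v = t} = {v. v < n \<and> lv' v = t}" using assms by auto
  have 4: "cands lv n \<Delta> t F = cands lv' n \<Delta> t F" unfolding cands_def 3 ..
  show ?thesis unfolding procLevel_def 1 2 4 ..
qed

locale cgd = cg +
  fixes \<Delta> :: nat
  assumes deg: "max_degree_le n E \<Delta>"
begin

lemma E_fin: "finite E"
proof -
  have "E \<subseteq> {0..<n} \<times> {0..<n}" using E_sub by auto
  moreover have "finite ({0..<n} \<times> {0..<n})" by simp
  ultimately show ?thesis using finite_subset by blast
qed

lemma nb_fin: "finite {y. (m,y) \<in> E}"
proof -
  have "{y. (m,y) \<in> E} \<subseteq> {0..<n}" using E_sub by fastforce
  then show ?thesis using finite_subset by blast
qed

lemma deg_le: "card {y. (m,y) \<in> E} \<le> \<Delta>"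
proof (cases "m < n")
  case True then show ?thesis using deg unfolding max_degree_le_def by auto
next
  case False
  then have "{y. (m,y) \<in> E} = {}" using E_sub by fastforce
  then show ?thesis by simp
qed

lemma degF: "F \<subseteq> E \<Longrightarrow> card {y. (m,y) \<in> F} \<le> \<Delta>"
proof -
  assume "F \<subseteq> E"
  then have "{y. (m,y) \<in> F} \<subseteq> {y. (m,y) \<in> E}" by blast
  then have "card {y. (m,y) \<in> F} \<le> card {y. (m,y) \<in> E}" using card_mono[OF nb_fin[of m]] by blast
  then show ?thesis using deg_le[of m] by linarith
qed

lemma nbh_len: "F \<subseteq> E \<Longrightarrow> length (nbh F m) \<le> \<Delta> + 1"
proof -
  assume F: "F \<subseteq> E"
  have fin: "finite {y. (m,y) \<in> F}" using F by (intro finite_subset[OF _ nb_fin[of m]]) auto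
  have "length (nbh F m) = card (insert m {y. (m,y) \<in> F})"
    unfolding nbh_def by (simp only: length_sorted_list_of_set)
  also have "\<dots> \<le> card {y. (m,y) \<in> F} + 1" using fin by (simp add: card_insert_if)
  finally show ?thesis using degF[OF F, of m] by simp
qed

lemma search_cost: "F \<subseteq> E \<Longrightarrow> cost (search r F Bs v S) dd \<le> r * (\<Delta> + 1)"
proof (induction r arbitrary: S)
  case 0 then show ?case by simp
next
  case (Suc r)
  show ?case
  proof (cases "card S \<le> 1")
    case True then show ?thesis by simp
  next
    case False
    let ?ys = "nbh F (median F Bs S)"
    have "cost (search (Suc r) F Bs v S) dd = length ?ys + cost (search r F Bs v (filt F ?ys (map (dd v) ?ys) S)) dd"
      using False by (simp add: sum_list_triv)
    also have "\<dots> \<le> (\<Delta> + 1) + r * (\<Delta> + 1)"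
      using nbh_len[OF Suc.prems] Suc.IH[OF Suc.prems] by (meson add_mono)
    finally show ?thesis by simp
  qed
qed


definition dset where "dset y Q = Min ((\<lambda>q. dd y q) ` Q)"
definition par where "par t v = {p. (v,p) \<in> E \<and> lvl p = t}"

lemma par_fin: "finite (par t v)"
  unfolding par_def by (rule finite_subset[OF _ nb_fin[of v]]) blast
lemma par_ne: "v < n \<Longrightarrow> lvl v = Suc t \<Longrightarrow> par t v \<noteq> {}"
  unfolding par_def using parent by blast
lemma par_L: "par t v \<subseteq> L t"
  unfolding par_def L_def using E_sub by fastforce

lemma dset_le: "finite Q \<Longrightarrow> q \<in> Q \<Longrightarrow> dset y Q \<le> dd y q"
  unfolding dset_def by simp
lemma dset_in: "finite Q \<Longrightarrow> Q \<noteq> {} \<Longrightarrow> \<exists>q\<in>Q. dset y Q = dd y q"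
proof -
  assume "finite Q" "Q \<noteq> {}"
  then have "Min ((\<lambda>q. dd y q) ` Q) \<in> (\<lambda>q. dd y q) ` Q" by (intro Min_in) auto
  then show ?thesis unfolding dset_def by auto
qed

lemma dsetF_eq: "Q \<subseteq> B t \<Longrightarrow> y \<in> B t \<Longrightarrow> dsetF (EB t) y Q = dset y Q"
proof -
  assume Q: "Q \<subseteq> B t" and y: "y \<in> B t"
  have "(\<lambda>q. sp_dist (EB t) y q) ` Q = (\<lambda>q. dd y q) ` Q"
    using dist_B[OF y] Q by (intro image_cong) auto
  then show ?thesis unfolding dsetF_def dset_def by simp
qed

lemma dist_v:
  assumes v: "v < n" "lvl v = Suc t" and y: "y < n" "lvl y \<le> t"
  shows "dd v y = Suc (dset y (par t v))"
proof -
  obtain p where p: "(v,p) \<in> E" "lvl p = t" "dd v y = Suc (dd p y)"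
    using second_vertex[OF v y] by blast
  have pP: "p \<in> par t v" unfolding par_def using p by simp
  have pn: "p < n" using p E_sub by blast
  have 1: "dset y (par t v) \<le> dd y p" using dset_le[OF par_fin pP] .
  obtain q where q: "q \<in> par t v" "dset y (par t v) = dd y q"
    using dset_in[OF par_fin par_ne[OF v]] by blast
  have qn: "q < n" "(v,q) \<in> E" using q unfolding par_def using E_sub by auto
  have "dd v y \<le> dd v q + dd q y" using tri[OF v(1) qn(1) y(1)] .
  also have "\<dots> = Suc (dd y q)" using adj_dist[OF qn(2)] dist_sym[OF qn(1) y(1)] by simp
  finally have "dd v y \<le> Suc (dset y (par t v))" using q by simp
  moreover have "dd p y = dd y p" using dist_sym pn y by blast
  ultimately show ?thesis using p 1 by simp
qed

lemma lip_set:
  assumes "(m,x) \<in> E" "Q \<subseteq> {..<n}" "finite Q" "Q \<noteq> {}"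
  shows "dset x Q \<le> dset m Q + 1"
proof -
  obtain q where q: "q \<in> Q" "dset m Q = dd m q" using dset_in assms by blast
  have "dset x Q \<le> dd x q" using dset_le assms q by blast
  also have "\<dots> \<le> dd m q + 1" using lip[OF assms(1)] q assms by blast
  finally show ?thesis using q by simp
qed

lemma cands_facts:
  assumes "Q \<in> cands lvl n \<Delta> t (EB t)"
  shows "Q \<subseteq> L t" "Q \<subseteq> B t" "Q \<noteq> {}" "finite Q" "Q \<subseteq> {..<n}"
    "\<And>a b. a \<in> Q \<Longrightarrow> b \<in> Q \<Longrightarrow> a \<noteq> b \<Longrightarrow> (a,b) \<in> EB t"
proof -
  show Q: "Q \<subseteq> L t" using assms unfolding cands_def L_def by auto
  then show "Q \<subseteq> B t" unfolding L_def B_def by auto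
  show "Q \<noteq> {}" using assms unfolding cands_def by auto
  show "Q \<subseteq> {..<n}" using Q unfolding L_def by auto
  then show "finite Q" using finite_subset by blast
  show "\<And>a b. a \<in> Q \<Longrightarrow> b \<in> Q \<Longrightarrow> a \<noteq> b \<Longrightarrow> (a,b) \<in> EB t"
    using assms unfolding cands_def by auto
qed

lemma dset0: "finite Q \<Longrightarrow> y < n \<Longrightarrow> Q \<subseteq> {..<n} \<Longrightarrow> Q \<noteq> {} \<Longrightarrow> dset y Q = 0 \<longleftrightarrow> y \<in> Q"
proof
  assume a: "finite Q" "y < n" "Q \<subseteq> {..<n}" "Q \<noteq> {}" "dset y Q = 0"
  then obtain q where "q \<in> Q" "dset y Q = dd y q" using dset_in a by blast
  moreover have "q < n" using \<open>q \<in> Q\<close> a by auto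
  ultimately have "y = q" using a dist_eq0[of y q] by simp
  then show "y \<in> Q" using \<open>q \<in> Q\<close> by simp
next
  assume a: "finite Q" "y < n" "Q \<subseteq> {..<n}" "Q \<noteq> {}" "y \<in> Q"
  then show "dset y Q = 0" using dset_le[of Q y y] dist_0 by simp
qed

lemma halving:
  assumes v: "v < n" "lvl v = Suc t"
    and S: "S \<subseteq> cands lvl n \<Delta> t (EB t)" "finite S" "par t v \<in> S" "2 \<le> card S"
    and m: "m \<in> B t" "\<forall>y\<in>B t. score (EB t) S m \<le> score (EB t) S y"
    and S': "S' = {Q\<in>S. \<forall>y\<in>insert m {y. (m,y) \<in> EB t}. Suc (dsetF (EB t) y Q) = dd v y}"
  shows "2 * card S' \<le> card S"
proof -
  let ?P = "par t v"
  let ?N = "insert m {y. (m,y) \<in> EB t}"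
  have NB: "?N \<subseteq> B t" using m unfolding EB_def by auto
  have Bn: "\<And>y. y \<in> B t \<Longrightarrow> y < n \<and> lvl y \<le> t" unfolding B_def by auto
  have PB: "?P \<subseteq> B t" using par_L unfolding L_def B_def by auto
  have Pn: "?P \<subseteq> {..<n}" "finite ?P" "?P \<noteq> {}" using PB par_fin par_ne[OF v] unfolding B_def by auto
  have dvP: "\<And>y. y \<in> B t \<Longrightarrow> dd v y = Suc (dset y ?P)" using dist_v[OF v] Bn by blast
  have cf: "\<And>Q. Q \<in> S \<Longrightarrow> Q \<subseteq> L t \<and> Q \<subseteq> B t \<and> Q \<noteq> {} \<and> finite Q \<and> Q \<subseteq> {..<n}"
  proof -
    fix Q assume "Q \<in> S"
    then have c: "Q \<in> cands lvl n \<Delta> t (EB t)" using S(1) by blast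
    show "Q \<subseteq> L t \<and> Q \<subseteq> B t \<and> Q \<noteq> {} \<and> finite Q \<and> Q \<subseteq> {..<n}"
      using cands_facts(1)[OF c] cands_facts(2)[OF c] cands_facts(3)[OF c] cands_facts(4)[OF c] cands_facts(5)[OF c]
      by (intro conjI)
  qed
  have eqP: "\<And>Q y. Q \<in> S' \<Longrightarrow> y \<in> ?N \<Longrightarrow> dset y Q = dset y ?P"
  proof -
    fix Q y assume Q: "Q \<in> S'" "y \<in> ?N"
    then have "Suc (dsetF (EB t) y Q) = dd v y" "Q \<in> S" using S' by auto
    moreover have "dsetF (EB t) y Q = dset y Q" using dsetF_eq cf[OF \<open>Q \<in> S\<close>] NB Q by blast
    moreover have "dd v y = Suc (dset y ?P)" using dvP NB Q by blast
    ultimately show "dset y Q = dset y ?P" by simp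
  qed
  have S'S: "S' \<subseteq> S" using S' by auto
  have finS': "finite S'" using S'S S(2) finite_subset by blast
  show ?thesis
  proof (cases "dset m ?P")
    case 0
    then have mP: "m \<in> ?P" using dset0 Pn Bn m by blast
    have "S' \<subseteq> {?P}"
    proof
      fix Q assume QS': "Q \<in> S'"
      then have QS: "Q \<in> S" using S'S by blast
      have mQ: "m \<in> Q" using eqP[OF QS', of m] 0 dset0 cf[OF QS] Bn m by auto
      have "Q = ?P"
      proof
        show "Q \<subseteq> ?P"
        proof
          fix y assume yQ: "y \<in> Q"
          have yN: "y \<in> ?N"
          proof (cases "y = m")
            case True then show ?thesis by simp
          next
            case False then have "(m,y) \<in> EB t" using cands_facts(6)[of Q t m y] S(1) QS mQ yQ by blast
            then show ?thesis by simp
          qed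
          have yn: "y < n" using yQ cf[OF QS] by auto
          have "dset y Q = 0" using dset0 cf[OF QS] yQ yn by blast
          then have "dset y ?P = 0" using eqP[OF QS' yN] by simp
          then show "y \<in> ?P" using dset0 Pn yn by blast
        qed
      next
        show "?P \<subseteq> Q"
        proof
          fix y assume yP: "y \<in> ?P"
          have yL: "y \<in> L t" "m \<in> L t" using yP mP par_L by auto
          have yN: "y \<in> ?N"
          proof (cases "y = m")
            case True then show ?thesis by simp
          next
            case False
            have "(v,m) \<in> E" "(v,y) \<in> E" "lvl m = t" "lvl y = t" using mP yP unfolding par_def by auto
            then have "(m,y) \<in> E" using lower_clique[OF v] False by blast
            then have "(m,y) \<in> EB t" using yL unfolding EB_def L_def B_def by auto
            then show ?thesis by simp
          qed
          have yn: "y < n" using yL unfolding L_def by auto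
          have "dset y ?P = 0" using dset0 Pn yP yn by blast
          then have "dset y Q = 0" using eqP[OF QS' yN] by simp
          then show "y \<in> Q" using dset0 cf[OF QS] yn by blast
        qed
      qed
      then show "Q \<in> {?P}" by simp
    qed
    then have "card S' \<le> 1" using card_mono[of "{?P}" S'] by simp
    then show ?thesis using S(4) by linarith
  next
    case (Suc D)
    obtain p where p: "p \<in> ?P" "dset m ?P = dd m p" using dset_in Pn by blast
    have "\<exists>x. (m,x) \<in> EB t \<and> dd x p = D" using geo_step[of m t p D] m p PB Suc by auto
    then obtain x where x: "(m,x) \<in> EB t" "dd x p = D" by blast
    have xE: "(m,x) \<in> E" "(x,m) \<in> E" using x EB_E E_sym by auto
    have xN: "x \<in> ?N" using x by simp
    have xB: "x \<in> B t" using NB xN by blast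
    have "dset x ?P \<le> D" using dset_le[OF Pn(2) p(1), of x] x by simp
    moreover have "dset m ?P \<le> dset x ?P + 1" using lip_set[OF xE(2)] Pn by blast
    ultimately have dxP: "dset x ?P = D" using Suc by simp
    have keyS': "\<And>Q. Q \<in> S' \<Longrightarrow> dset x Q + 1 = dset m Q"
      using eqP xN dxP Suc by auto
    have keyS: "\<And>Q. Q \<in> S \<Longrightarrow> dset x Q \<le> dset m Q + 1"
      using lip_set[OF xE(1)] cf by blast
    have sc: "\<And>y. y \<in> B t \<Longrightarrow> score (EB t) S y = (\<Sum>Q\<in>S. dset y Q)"
      unfolding score_def using dsetF_eq cf by (intro sum.cong) auto
    have split: "\<And>f. (\<Sum>Q\<in>S. f Q) = (\<Sum>Q\<in>S'. f Q) + (\<Sum>Q\<in>S - S'. f Q)"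
      using sum.subset_diff[OF S'S S(2)] by (simp add: add.commute)
    have "(\<Sum>Q\<in>S. dset x Q) + card S' = (\<Sum>Q\<in>S'. dset x Q + 1) + (\<Sum>Q\<in>S - S'. dset x Q)"
      using split[of "\<lambda>Q. dset x Q"] by (simp add: sum_Suc)
    also have "\<dots> = (\<Sum>Q\<in>S'. dset m Q) + (\<Sum>Q\<in>S - S'. dset x Q)"
      using keyS' by (simp cong: sum.cong)
    also have "\<dots> \<le> (\<Sum>Q\<in>S'. dset m Q) + (\<Sum>Q\<in>S - S'. dset m Q + 1)"
      using keyS by (intro add_left_mono sum_mono) auto
    also have "\<dots> = (\<Sum>Q\<in>S. dset m Q) + card (S - S')"
      using split[of "\<lambda>Q. dset m Q"] by (simp add: sum_Suc)
    finally have 1: "(\<Sum>Q\<in>S. dset x Q) + card S' \<le> (\<Sum>Q\<in>S. dset m Q) + card (S - S')" .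
    have "(\<Sum>Q\<in>S. dset m Q) \<le> (\<Sum>Q\<in>S. dset x Q)" using m xB sc by metis
    then have "card S' \<le> card (S - S')" using 1 by linarith
    moreover have "card (S - S') = card S - card S'" using card_Diff_subset[OF finS' S'S] .
    moreover have "card S' \<le> card S" using card_mono[OF S(2) S'S] .
    ultimately show ?thesis by linarith
  qed
qed

lemma B_fin: "finite (B t)" unfolding B_def by simp
lemma B0: "0 \<in> B t" unfolding B_def using npos lvl_zero by simp

lemma median_prop: "median F (B t) S \<in> B t \<and> (\<forall>y\<in>B t. score F S (median F (B t) S) \<le> score F S y)"
proof -
  have "\<exists>x. x \<in> B t \<and> (\<forall>y. y \<in> B t \<longrightarrow> score F S x \<le> score F S y)"
    using ex_has_least_nat[of "\<lambda>y. y \<in> B t" 0 "score F S"] B0 by blast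
  then have "\<exists>x. x \<in> B t \<and> (\<forall>y\<in>B t. score F S x \<le> score F S y)" by blast
  then show ?thesis unfolding median_def by (rule someI_ex)
qed

lemma filt_eq: "filt F ys (map (dd v) ys) S = {Q\<in>S. \<forall>y\<in>set ys. Suc (dsetF F y Q) = dd v y}"
  unfolding filt_def list_all2_map2 list_all2_same by simp

lemma nbh_set: "set (nbh (EB t) m) = insert m {y. (m,y) \<in> EB t}"
proof -
  have "finite {y. (m,y) \<in> EB t}" by (rule finite_subset[OF _ nb_fin[of m]]) (use EB_E in blast)
  then have "finite (insert m {y. (m,y) \<in> EB t})" by simp
  then show ?thesis unfolding nbh_def by (rule set_sorted_list_of_set)
qed

lemma one_elem: "finite S \<Longrightarrow> card S \<le> 1 \<Longrightarrow> P \<in> S \<Longrightarrow> S = {P}"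
  using card_le_Suc0_iff_eq by fastforce

lemma search_ok:
  assumes v: "v < n" "lvl v = Suc t"
  shows "S \<subseteq> cands lvl n \<Delta> t (EB t) \<Longrightarrow> finite S \<Longrightarrow> par t v \<in> S \<Longrightarrow> card S \<le> 2^r \<Longrightarrow>
     res (search r (EB t) (B t) v S) dd = {par t v}"
proof (induction r arbitrary: S)
  case 0 then show ?case using one_elem by simp
next
  case (Suc r)
  show ?case
  proof (cases "card S \<le> 1")
    case True then show ?thesis using one_elem Suc.prems by simp
  next
    case False
    define m where "m = median (EB t) (B t) S"
    define S' where "S' = {Q\<in>S. \<forall>y\<in>insert m {y. (m,y) \<in> EB t}. Suc (dsetF (EB t) y Q) = dd v y}"
    have mp: "m \<in> B t" "\<forall>y\<in>B t. score (EB t) S m \<le> score (EB t) S y"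
      using median_prop unfolding m_def by auto
    have eq: "res (search (Suc r) (EB t) (B t) v S) dd = res (search r (EB t) (B t) v S') dd"
      using False by (simp add: filt_eq nbh_set S'_def m_def)
    have h: "2 * card S' \<le> card S"
      by (rule halving[OF v Suc.prems(1,2,3) _ mp S'_def]) (use False in simp)
    have S'S: "S' \<subseteq> S" unfolding S'_def by auto
    have PS': "par t v \<in> S'"
    proof -
      have "\<And>y. y \<in> insert m {y. (m,y) \<in> EB t} \<Longrightarrow> Suc (dsetF (EB t) y (par t v)) = dd v y"
      proof -
        fix y assume y: "y \<in> insert m {y. (m,y) \<in> EB t}"
        then have yB: "y \<in> B t" using mp unfolding EB_def by auto
        have PB: "par t v \<subseteq> B t" using par_L unfolding L_def B_def by auto
        have "dsetF (EB t) y (par t v) = dset y (par t v)" using dsetF_eq[OF PB yB] .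
        moreover have "dd v y = Suc (dset y (par t v))" using dist_v[OF v] yB unfolding B_def by auto
        ultimately show "Suc (dsetF (EB t) y (par t v)) = dd v y" by simp
      qed
      then show ?thesis unfolding S'_def using Suc.prems(3) by blast
    qed
    have "card S' \<le> 2^r" using h Suc.prems(4) by simp
    then have "res (search r (EB t) (B t) v S') dd = {par t v}"
      using Suc.IH[of S'] S'S Suc.prems PS' finite_subset by blast
    then show ?thesis using eq by simp
  qed
qed

lemma sum_list_bound: "(\<And>x. x \<in> set xs \<Longrightarrow> f x \<le> (K::nat)) \<Longrightarrow> sum_list (map f xs) \<le> length xs * K"
proof (induction xs)
  case Nil then show ?case by simp
next
  case (Cons a xs) then show ?case by fastforce
qed

lemma clog_ok: "m + 1 \<le> 2 ^ clog m"
proof -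
  have "m + 1 \<le> 2 ^ (m + 1)" by (induction m) auto
  then show ?thesis unfolding clog_def by (rule LeastI)
qed

lemma cands_sub: "cands lvl n \<Delta> t F \<subseteq> {Q. Q \<subseteq> L t \<and> card Q \<le> \<Delta>}"
  unfolding cands_def L_def by auto

lemma L_fin: "finite (L t)" unfolding L_def by simp

lemma cands_fin: "finite (cands lvl n \<Delta> t F)"
  using cands_sub[of t F] finite_subset[of _ "Pow (L t)"] L_fin by blast

lemma cands_card: "card (cands lvl n \<Delta> t F) \<le> 2 ^ (\<Delta> * clog n)"
proof -
  have "card (cands lvl n \<Delta> t F) \<le> card {Q. Q \<subseteq> L t \<and> card Q \<le> \<Delta>}"
  proof (rule card_mono)
    have "{Q. Q \<subseteq> L t \<and> card Q \<le> \<Delta>} \<subseteq> Pow (L t)" by auto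
    then show "finite {Q. Q \<subseteq> L t \<and> card Q \<le> \<Delta>}" using L_fin[of t] finite_subset by blast
  qed (rule cands_sub)
  also have "\<dots> \<le> (card (L t) + 1) ^ \<Delta>" by (rule count_subsets[OF L_fin])
  also have "\<dots> \<le> (n + 1) ^ \<Delta>"
  proof -
    have "L t \<subseteq> {0..<n}" unfolding L_def by auto
    then have "card (L t) \<le> n" using card_mono[of "{0..<n}" "L t"] by simp
    then show ?thesis by (simp add: power_mono)
  qed
  also have "\<dots> \<le> (2 ^ clog n) ^ \<Delta>" using clog_ok[of n] by (simp add: power_mono)
  also have "\<dots> = 2 ^ (\<Delta> * clog n)" by (simp add: power_mult[symmetric] mult.commute)
  finally show ?thesis .
qed

lemma par_cands: "v < n \<Longrightarrow> lvl v = Suc t \<Longrightarrow> par t v \<in> cands lvl n \<Delta> t (EB t)"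
proof -
  assume v: "v < n" "lvl v = Suc t"
  have 1: "par t v \<subseteq> {v. v < n \<and> lvl v = t}" using par_L unfolding L_def by simp
  have "par t v \<subseteq> {y. (v,y) \<in> E}" unfolding par_def by auto
  then have 2: "card (par t v) \<le> \<Delta>" using card_mono[OF nb_fin] deg_le[of v] le_trans by blast
  have 3: "\<forall>a\<in>par t v. \<forall>b\<in>par t v. a \<noteq> b \<longrightarrow> (a,b) \<in> EB t"
  proof (intro ballI impI)
    fix a b assume ab: "a \<in> par t v" "b \<in> par t v" "a \<noteq> b"
    then have "(a,b) \<in> E" using lower_clique[OF v] unfolding par_def by blast
    moreover have "a \<in> B t" "b \<in> B t" using ab par_L unfolding L_def B_def by auto
    ultimately show "(a,b) \<in> EB t" unfolding EB_def by auto
  qed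
  show ?thesis unfolding cands_def using 1 2 3 par_ne[OF v] by blast
qed

lemma res_chk: "res (chk p) dd = (if dd (fst p) (snd p) = 1 then {p} else {})"
  unfolding chk_def by simp
lemma cost_chk: "cost (chk p) dd = 1"
  unfolding chk_def by simp

lemma prs_mem: "x \<in> set (prs (map (\<lambda>v. (v, f v)) vs)) \<longleftrightarrow>
   (fst x \<in> set vs \<and> snd x \<in> set vs \<and> fst x \<noteq> snd x \<and> f (fst x) \<inter> f (snd x) \<noteq> {})"
  unfolding prs_def by force

lemma prs_len: "length (prs rs) = sum_list (map (\<lambda>a. length (filter (\<lambda>b. fst a \<noteq> fst b \<and> snd a \<inter> snd b \<noteq> {}) rs)) rs)"
  unfolding prs_def by (simp add: length_concat comp_def)

lemma pedges_mem: "x \<in> pedges (map (\<lambda>v. (v, f v)) vs) \<longleftrightarrow>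
   (\<exists>v\<in>set vs. (fst x = v \<and> snd x \<in> f v) \<or> (snd x = v \<and> fst x \<in> f v))"
  unfolding pedges_def by (cases x) auto

lemma Lsuc_sep: "{v. v < n \<and> lvl v = Suc t} = L (Suc t)" unfolding L_def by simp
lemma B_sep: "{v. v < n \<and> lvl v \<le> t} = B t" unfolding B_def by simp

lemma level_ok:
  "res (procLevel n \<Delta> lvl t (EB t)) dd = EB (Suc t) \<and>
   cost (procLevel n \<Delta> lvl t (EB t)) dd \<le> card (L (Suc t)) * (\<Delta> * clog n * (\<Delta> + 1) + \<Delta> * \<Delta>)"
proof -
  define vs where "vs = sorted_list_of_set (L (Suc t))"
  define sr where "sr v = search (\<Delta> * clog n) (EB t) (B t) v (cands lvl n \<Delta> t (EB t))" for v
  define rs where "rs = map (\<lambda>v. (v, par t v)) vs"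
  have setvs: "set vs = L (Suc t)" "distinct vs" using L_fin unfolding vs_def by auto
  have lenvs: "length vs = card (L (Suc t))" using L_fin unfolding vs_def by simp
  have unf: "procLevel n \<Delta> lvl t (EB t) = bindp (forM vs (\<lambda>v. bindp (sr v) (\<lambda>S. Ret (v, \<Union>S))))
      (\<lambda>rs. bindp (forM (prs rs) chk) (\<lambda>es. Ret (EB t \<union> pedges rs \<union> \<Union>(set es))))"
    unfolding procLevel_def vs_def sr_def Lsuc_sep B_sep by simp
  have srv: "\<And>v. v \<in> set vs \<Longrightarrow> res (sr v) dd = {par t v}"
  proof -
    fix v assume "v \<in> set vs"
    then have v: "v < n" "lvl v = Suc t" using setvs unfolding L_def by auto
    show "res (sr v) dd = {par t v}" unfolding sr_def
      by (rule search_ok[OF v]) (auto simp: cands_fin cands_card par_cands[OF v])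
  qed
  have r1: "res (forM vs (\<lambda>v. bindp (sr v) (\<lambda>S. Ret (v, \<Union>S)))) dd = rs"
    unfolding rs_def using srv by simp
  have c1: "cost (forM vs (\<lambda>v. bindp (sr v) (\<lambda>S. Ret (v, \<Union>S)))) dd = sum_list (map (\<lambda>v. cost (sr v) dd) vs)"
    by simp
  have resv: "res (procLevel n \<Delta> lvl t (EB t)) dd = EB t \<union> pedges rs \<union> \<Union>(set (map (\<lambda>p. res (chk p) dd) (prs rs)))"
    unfolding unf using r1 by simp
  have costv: "cost (procLevel n \<Delta> lvl t (EB t)) dd = sum_list (map (\<lambda>v. cost (sr v) dd) vs) + length (prs rs)"
    unfolding unf using r1 by (simp add: cost_chk sum_list_triv)
  have es: "\<Union>(set (map (\<lambda>p. res (chk p) dd) (prs rs))) = {p \<in> set (prs rs). dd (fst p) (snd p) = 1}"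
    by (auto simp: res_chk split: if_splits)
  have R: "res (procLevel n \<Delta> lvl t (EB t)) dd = EB (Suc t)"
  proof
    show "res (procLevel n \<Delta> lvl t (EB t)) dd \<subseteq> EB (Suc t)"
    proof
      fix x assume "x \<in> res (procLevel n \<Delta> lvl t (EB t)) dd"
      then consider "x \<in> EB t" | "x \<in> pedges rs" | "x \<in> set (prs rs)" "dd (fst x) (snd x) = 1"
        unfolding resv es by blast
      then show "x \<in> EB (Suc t)"
      proof cases
        case 1 then show ?thesis using EB_mono[of t "Suc t"] by auto
      next
        case 2
        then obtain v where v: "v \<in> set vs" "(fst x = v \<and> snd x \<in> par t v) \<or> (snd x = v \<and> fst x \<in> par t v)"
          unfolding rs_def pedges_mem by blast
        then have vL: "v < n" "lvl v = Suc t" using setvs unfolding L_def by auto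
        show ?thesis
        proof (cases "fst x = v \<and> snd x \<in> par t v")
          case True
          then have "(fst x, snd x) \<in> E" "lvl (snd x) = t" unfolding par_def by auto
          moreover have "snd x < n" using calculation(1) E_sub by blast
          ultimately show ?thesis using True vL unfolding EB_def B_def by (cases x) auto
        next
          case False
          then have F: "snd x = v" "fst x \<in> par t v" using v by auto
          then have "(v, fst x) \<in> E" "lvl (fst x) = t" unfolding par_def by auto
          moreover have "fst x < n" using calculation(1) E_sub by blast
          moreover have "(fst x, v) \<in> E" using calculation(1) E_sym by blast
          ultimately show ?thesis using F vL unfolding EB_def B_def by (cases x) auto
        qed
      next
        case 3
        then have "fst x \<in> set vs" "snd x \<in> set vs" unfolding rs_def prs_mem by auto
        then have "fst x < n" "snd x < n" "lvl (fst x) = Suc t" "lvl (snd x) = Suc t"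
          using setvs unfolding L_def by auto
        moreover have "(fst x, snd x) \<in> E" using dist1 3 calculation by blast
        ultimately show ?thesis unfolding EB_def B_def by (cases x) auto
      qed
    qed
  next
    show "EB (Suc t) \<subseteq> res (procLevel n \<Delta> lvl t (EB t)) dd"
    proof
      fix x assume xE: "x \<in> EB (Suc t)"
      obtain a b where ab: "x = (a,b)" by (cases x)
      have e: "(a,b) \<in> E" "a < n" "b < n" "lvl a \<le> Suc t" "lvl b \<le> Suc t"
        using xE ab unfolding EB_def B_def by auto
      have "x \<in> EB t \<or> x \<in> pedges rs \<or> (x \<in> set (prs rs) \<and> dd (fst x) (snd x) = 1)"
      proof (cases "lvl a \<le> t \<and> lvl b \<le> t")
        case True then show ?thesis using e ab unfolding EB_def B_def by auto
      next
        case False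
        then consider "lvl a = Suc t" "lvl b \<le> t" | "lvl b = Suc t" "lvl a \<le> t" | "lvl a = Suc t" "lvl b = Suc t"
          using e by linarith
        then show ?thesis
        proof cases
          case 1
          then have "lvl b = t" using lvl_adj2[OF e(1)] by simp
          then have "b \<in> par t a" "a \<in> set vs" unfolding par_def using e 1 setvs unfolding L_def by auto
          then have "x \<in> pedges rs" unfolding rs_def pedges_mem using ab by auto
          then show ?thesis by blast
        next
          case 2
          then have "lvl a = t" using lvl_adj[OF e(1)] by simp
          moreover have "(b,a) \<in> E" using e E_sym by blast
          ultimately have "a \<in> par t b" "b \<in> set vs" unfolding par_def using e 2 setvs unfolding L_def by auto
          then have "x \<in> pedges rs" unfolding rs_def pedges_mem using ab by auto
          then show ?thesis by blast
        next
          case 3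
          obtain c where c: "(a,c) \<in> E" "(b,c) \<in> E" "lvl c = t" using common_parent[OF e(2,3) 3 e(1)] by blast
          have "a \<noteq> b" using e E_irr by auto
          moreover have "c \<in> par t a \<inter> par t b" using c unfolding par_def by auto
          moreover have "a \<in> set vs" "b \<in> set vs" using e 3 setvs unfolding L_def by auto
          ultimately have "x \<in> set (prs rs)" unfolding rs_def prs_mem using ab by auto
          moreover have "dd a b = 1" using adj_dist e by blast
          ultimately show ?thesis using ab by auto
        qed
      qed
      then show "x \<in> res (procLevel n \<Delta> lvl t (EB t)) dd" unfolding resv es by blast
    qed
  qed
  have C1: "sum_list (map (\<lambda>v. cost (sr v) dd) vs) \<le> length vs * (\<Delta> * clog n * (\<Delta> + 1))"
    by (rule sum_list_bound) (use search_cost[OF EB_E] in \<open>simp add: sr_def\<close>)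
  have C2: "length (prs rs) \<le> length vs * (\<Delta> * \<Delta>)"
  proof -
    have "length (prs rs) = sum_list (map (\<lambda>a. length (filter (\<lambda>b. fst a \<noteq> fst b \<and> snd a \<inter> snd b \<noteq> {}) rs)) rs)"
      by (rule prs_len)
    also have "\<dots> \<le> length rs * (\<Delta> * \<Delta>)"
    proof (rule sum_list_bound)
      fix a assume "a \<in> set rs"
      then obtain u where u: "u \<in> set vs" "a = (u, par t u)" unfolding rs_def by auto
      have "length (filter (\<lambda>b. fst a \<noteq> fst b \<and> snd a \<inter> snd b \<noteq> {}) rs)
          = length (filter (\<lambda>w. u \<noteq> w \<and> par t u \<inter> par t w \<noteq> {}) vs)"
        unfolding rs_def u by (simp add: filter_map comp_def)
      also have "\<dots> = card ({w. u \<noteq> w \<and> par t u \<inter> par t w \<noteq> {}} \<inter> set vs)"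
        using distinct_length_filter[OF setvs(2)] by simp
      also have "\<dots> \<le> card (\<Union>p\<in>par t u. {w. (p,w) \<in> E})"
      proof (rule card_mono)
        show "finite (\<Union>p\<in>par t u. {w. (p,w) \<in> E})" using par_fin nb_fin by blast
        show "{w. u \<noteq> w \<and> par t u \<inter> par t w \<noteq> {}} \<inter> set vs \<subseteq> (\<Union>p\<in>par t u. {w. (p,w) \<in> E})"
          unfolding par_def using E_sym by blast
      qed
      also have "\<dots> \<le> (\<Sum>p\<in>par t u. card {w. (p,w) \<in> E})" by (rule card_UN_le[OF par_fin])
      also have "\<dots> \<le> (\<Sum>p\<in>par t u. \<Delta>)" by (rule sum_mono) (rule deg_le)
      also have "\<dots> = card (par t u) * \<Delta>" by simp
      also have "\<dots> \<le> \<Delta> * \<Delta>"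
      proof -
        have "par t u \<subseteq> {y. (u,y) \<in> E}" unfolding par_def by auto
        then have "card (par t u) \<le> \<Delta>" using card_mono[OF nb_fin] deg_le[of u] le_trans by blast
        then show ?thesis by simp
      qed
      finally show "length (filter (\<lambda>b. fst a \<noteq> fst b \<and> snd a \<inter> snd b \<noteq> {}) rs) \<le> \<Delta> * \<Delta>" .
    qed
    also have "\<dots> = length vs * (\<Delta> * \<Delta>)" unfolding rs_def by simp
    finally show ?thesis .
  qed
  have "cost (procLevel n \<Delta> lvl t (EB t)) dd \<le> length vs * (\<Delta> * clog n * (\<Delta> + 1)) + length vs * (\<Delta> * \<Delta>)"
    using costv C1 C2 by linarith
  then show ?thesis using R lenvs by (simp add: algebra_simps)
qed

lemma lvl_bound: "x < n \<Longrightarrow> lvl x < n"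
proof -
  assume x: "x < n"
  define D where "D = lvl x"
  have w: "(0,x) \<in> E^^D" using dist_walk[OF npos x] unfolding D_def lvl_def .
  have sh: "\<forall>k<D. (0,x) \<notin> E^^k" unfolding D_def lvl_def sp_dist_def using not_less_Least by blast
  obtain f where f: "f 0 = 0" "f D = x" "\<forall>i<D. (f i, f (Suc i)) \<in> E" using w by (auto simp: relpow_fun_conv)
  have inj: "inj_on f {0..D}"
  proof (rule inj_onI)
    fix i j assume ij: "i \<in> {0..D}" "j \<in> {0..D}" "f i = f j"
    show "i = j"
    proof (rule ccontr)
      assume "i \<noteq> j"
      then consider "i < j" | "j < i" by linarith
      then show False
      proof cases
        case 1 then show False using shortest_inj[of D f E i j] f sh ij by auto
      next
        case 2 then show False using shortest_inj[of D f E j i] f sh ij by auto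
      qed
    qed
  qed
  have img: "f ` {0..D} \<subseteq> {0..<n}"
  proof
    fix y assume "y \<in> f ` {0..D}"
    then obtain i where i: "i \<le> D" "y = f i" by auto
    show "y \<in> {0..<n}"
    proof (cases "i = D")
      case True then show ?thesis using i f x by simp
    next
      case False then have "i < D" using i by simp
      then have "(f i, f (Suc i)) \<in> E" using f by blast
      then show ?thesis using i E_sub by fastforce
    qed
  qed
  have "card (f ` {0..D}) \<le> n" using card_mono[OF _ img] by simp
  then have "D + 1 \<le> n" using card_image[OF inj] by simp
  then show ?thesis unfolding D_def by simp
qed

lemma EB0: "EB 0 = {}"
proof -
  have "B 0 = {0}" unfolding B_def using lvl0 npos lvl_zero by auto
  then show ?thesis unfolding EB_def using E_irr by auto
qed

lemma EB_all: "EB (n - 1) = E"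
  unfolding EB_def B_def using E_sub lvl_bound by fastforce

lemma fold_ok:
  "res (foldM [t..<t+k] (\<lambda>t F. procLevel n \<Delta> lvl t F) (EB t)) dd = EB (t+k) \<and>
   cost (foldM [t..<t+k] (\<lambda>t F. procLevel n \<Delta> lvl t F) (EB t)) dd
     \<le> (\<Sum>j\<in>{t..<t+k}. card (L (Suc j)) * (\<Delta> * clog n * (\<Delta> + 1) + \<Delta> * \<Delta>))"
proof (induction k arbitrary: t)
  case 0 then show ?case by simp
next
  case (Suc k)
  have ups: "[t..<t + Suc k] = t # [Suc t..<Suc t + k]" by (simp add: upt_conv_Cons)
  have sums: "(\<Sum>j\<in>{t..<t+Suc k}. card (L (Suc j)) * (\<Delta> * clog n * (\<Delta> + 1) + \<Delta> * \<Delta>))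
     = card (L (Suc t)) * (\<Delta> * clog n * (\<Delta> + 1) + \<Delta> * \<Delta>) +
       (\<Sum>j\<in>{Suc t..<Suc t + k}. card (L (Suc j)) * (\<Delta> * clog n * (\<Delta> + 1) + \<Delta> * \<Delta>))"
    by (simp add: sum.atLeast_Suc_lessThan)
  have lv: "res (procLevel n \<Delta> lvl t (EB t)) dd = EB (Suc t)"
     "cost (procLevel n \<Delta> lvl t (EB t)) dd \<le> card (L (Suc t)) * (\<Delta> * clog n * (\<Delta> + 1) + \<Delta> * \<Delta>)"
    using level_ok by auto
  show ?case
    using Suc.IH[of "Suc t"] lv unfolding ups sums by simp
qed

lemma L_sum: "(\<Sum>j\<in>{0..<n-1}. card (L (Suc j))) \<le> n"
proof -
  have "(\<Sum>j\<in>{0..<n-1}. card (L (Suc j))) = card (\<Union>j\<in>{0..<n-1}. L (Suc j))"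
    by (rule card_UN_disjoint[symmetric]) (auto simp: L_fin L_def)
  also have "\<dots> \<le> card {0..<n}" by (rule card_mono) (auto simp: L_def)
  finally show ?thesis by simp
qed

lemma main_ok:
  assumes "2 \<le> n"
  shows "res (mainp n \<Delta>) dd = E \<and> cost (mainp n \<Delta>) dd \<le> n + n * (\<Delta> * clog n * (\<Delta> + 1) + \<Delta> * \<Delta>)"
proof -
  let ?K = "\<Delta> * clog n * (\<Delta> + 1) + \<Delta> * \<Delta>"
  define ls where "ls = map (\<lambda>v. dd 0 v) [0..<n]"
  have lsv: "\<forall>v<n. ls ! v = lvl v" unfolding ls_def lvl_def by simp
  have pl: "(\<lambda>t F. procLevel n \<Delta> (\<lambda>v. ls ! v) t F) = (\<lambda>t F. procLevel n \<Delta> lvl t F)"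
    using procLevel_cong[of n "\<lambda>v. ls ! v" lvl] lsv by auto
  have m: "mainp n \<Delta> = bindp (forM [0..<n] (\<lambda>v. qry 0 v)) (\<lambda>ls. foldM [0..<n-1] (\<lambda>t F. procLevel n \<Delta> (\<lambda>v. ls ! v) t F) {})"
    unfolding mainp_def using assms by simp
  have r0: "res (forM [0..<n] (\<lambda>v. qry 0 v)) dd = ls" unfolding ls_def by simp
  have c0: "cost (forM [0..<n] (\<lambda>v. qry 0 v)) dd = n" by (simp add: sum_list_triv)
  have f: "foldM [0..<n-1] (\<lambda>t F. procLevel n \<Delta> (\<lambda>v. ls ! v) t F) {} = foldM [0..<0 + (n-1)] (\<lambda>t F. procLevel n \<Delta> lvl t F) (EB 0)"
    using pl EB0 by simp
  have fo: "res (foldM [0..<0 + (n-1)] (\<lambda>t F. procLevel n \<Delta> lvl t F) (EB 0)) dd = E"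
    "cost (foldM [0..<0 + (n-1)] (\<lambda>t F. procLevel n \<Delta> lvl t F) (EB 0)) dd \<le> (\<Sum>j\<in>{0..<n-1}. card (L (Suc j)) * ?K)"
    using fold_ok[of 0 "n-1"] EB_all by auto
  have "(\<Sum>j\<in>{0..<n-1}. card (L (Suc j)) * ?K) = (\<Sum>j\<in>{0..<n-1}. card (L (Suc j))) * ?K"
    by (simp add: sum_distrib_right)
  also have "\<dots> \<le> n * ?K" using L_sum by (simp add: mult_right_mono)
  finally have "(\<Sum>j\<in>{0..<n-1}. card (L (Suc j)) * ?K) \<le> n * ?K" .
  then show ?thesis using m r0 c0 f fo by simp
qed
end

lemma clog_bound: "1 \<le> n \<Longrightarrow> real (clog n) \<le> log 2 (real n) + 1"
proof (cases "clog n")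
  case 0
  assume "1 \<le> n"
  then have "0 \<le> log 2 (real n)" by simp
  then show ?thesis using 0 by simp
next
  case (Suc c)
  assume n: "1 \<le> n"
  have "c < clog n" using Suc by simp
  then have "\<not> n + 1 \<le> 2 ^ c" unfolding clog_def using not_less_Least by blast
  then have "2 ^ c \<le> n" by simp
  then have "real c \<le> log 2 (real n)" using le_log2_of_power by blast
  then show ?thesis using Suc by simp
qed

lemma final_ineq:
  fixes n \<Delta> c :: nat
  assumes n: "2 \<le> n" and D: "1 \<le> \<Delta>" and c: "real c \<le> log 2 (real n) + 1"
  shows "real (n + n * (\<Delta> * c * (\<Delta> + 1) + \<Delta> * \<Delta>)) \<le>
     6 * real \<Delta> ^ 3 * 2 ^ \<Delta> * real n * (2 ^ \<Delta> + (log 2 (real n))\<^sup>2) * log 2 (real n)"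
proof -
  define L where "L = log 2 (real n)"
  define d where "d = real \<Delta>"
  define N where "N = real n"
  have L1: "1 \<le> L"
  proof -
    have "log 2 (2::real) \<le> log 2 (real n)" using n by (subst log_le_cancel_iff) auto
    then show ?thesis unfolding L_def by simp
  qed
  have d1: "1 \<le> d" using D unfolding d_def by simp
  have N0: "0 \<le> N" unfolding N_def by simp
  have cL: "real c \<le> 2 * L" using c L1 unfolding L_def by simp
  have dd: "d + 1 \<le> 2 * d" using d1 by simp
  have a: "d * real c * (d + 1) \<le> d * (2 * L) * (2 * d)"
  proof -
    have "d * real c \<le> d * (2 * L)" using cL d1 by (intro mult_left_mono) auto
    then show ?thesis using dd d1 L1 by (intro mult_mono) auto
  qed
  have b: "d * d \<le> d * d * L" using L1 d1 by (simp add: mult_le_cancel_left1)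
  have c1: "1 \<le> d * d * L"
  proof -
    have "1 * 1 \<le> d * d" using d1 by (intro mult_mono) auto
    then have "1 * 1 \<le> (d * d) * L" using L1 by (intro mult_mono) auto
    then show ?thesis by simp
  qed
  have K: "1 + (d * real c * (d + 1) + d * d) \<le> 6 * (d * d * L)"
    using a b c1 by (simp add: algebra_simps)
  have lhs: "real (n + n * (\<Delta> * c * (\<Delta> + 1) + \<Delta> * \<Delta>)) = N * (1 + (d * real c * (d + 1) + d * d))"
    unfolding N_def d_def by (simp add: algebra_simps)
  have big: "d * d \<le> d ^ 3 * 2 ^ \<Delta> * (2 ^ \<Delta> + L\<^sup>2)"
  proof -
    have "d * d \<le> d ^ 3" using d1 by (simp add: power3_eq_cube mult_le_cancel_left1)
    moreover have "1 \<le> (2::real) ^ \<Delta> * (2 ^ \<Delta> + L\<^sup>2)"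
    proof -
      have "1 \<le> (2::real) ^ \<Delta>" by simp
      moreover have "1 \<le> (2::real) ^ \<Delta> + L\<^sup>2" by (simp add: add_increasing2)
      ultimately have "1 * 1 \<le> (2::real) ^ \<Delta> * (2 ^ \<Delta> + L\<^sup>2)"
        by (intro mult_mono) auto
      then show ?thesis by simp
    qed
    moreover have "0 \<le> d ^ 3" using d1 by simp
    ultimately have "d ^ 3 * 1 \<le> d ^ 3 * (2 ^ \<Delta> * (2 ^ \<Delta> + L\<^sup>2))"
      by (intro mult_left_mono) auto
    then have "d * d \<le> d ^ 3 * (2 ^ \<Delta> * (2 ^ \<Delta> + L\<^sup>2))"
      using \<open>d * d \<le> d ^ 3\<close> by linarith
    then show ?thesis by (simp add: mult.assoc)
  qed
  have "N * (1 + (d * real c * (d + 1) + d * d)) \<le> N * (6 * (d * d * L))"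
    using K N0 by (rule mult_left_mono)
  also have "\<dots> = 6 * N * L * (d * d)" by (simp add: algebra_simps)
  also have "\<dots> \<le> 6 * N * L * (d ^ 3 * 2 ^ \<Delta> * (2 ^ \<Delta> + L\<^sup>2))"
    using big N0 L1 by (intro mult_left_mono) auto
  also have "\<dots> = 6 * d ^ 3 * 2 ^ \<Delta> * N * (2 ^ \<Delta> + L\<^sup>2) * L" by (simp add: algebra_simps)
  finally show ?thesis using lhs unfolding L_def d_def N_def by simp
qed


lemma prob_coins: "prob_space coins"
  unfolding coins_def by (rule prob_space_PiM) (rule prob_space_measure_pmf)

lemma delta_pos:
  assumes "simple_graph n E" "connected_graph n E" "max_degree_le n E \<Delta>" "2 \<le> n"
  shows "1 \<le> \<Delta>"
proof -
  have "(0,1) \<in> E\<^sup>*" using assms(2,4) unfolding connected_graph_def by auto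
  then obtain y where y: "(0,y) \<in> E"
  proof (rule converse_rtranclE)
    assume "0 = (1::nat)" then show ?thesis by simp
  next
    fix y assume "(0,y) \<in> E" "(y,1) \<in> E\<^sup>*"
    then show ?thesis using that by blast
  qed
  have fin: "finite {y. (0,y) \<in> E}"
  proof -
    have "{y. (0,y) \<in> E} \<subseteq> {0..<n}" using assms(1) unfolding simple_graph_def by auto
    then show ?thesis using finite_subset by blast
  qed
  have "{y. (0,y) \<in> E} \<noteq> {}" using y by blast
  then have "0 < card {y. (0,y) \<in> E}" using fin card_gt_0_iff by blast
  then have "1 \<le> card {y. (0,y) \<in> E}" by simp
  moreover have "card {y. (0,y) \<in> E} \<le> \<Delta>" using assms(3,4) unfolding max_degree_le_def by auto
  ultimately show ?thesis by simp
qed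

theorem theorem3:
  "\<exists>(A :: strategy) (C :: real). C > 0 \<and>
     (\<forall>n \<Delta> E. simple_graph n E \<and> connected_graph n E \<and> chordal E \<and> max_degree_le n E \<Delta> \<longrightarrow>
        query_cost A n \<Delta> (sp_dist E) \<in> borel_measurable coins \<and>
        (AE \<omega> in coins. halts A n \<Delta> (sp_dist E) \<omega> \<and> run_output A n \<Delta> (sp_dist E) \<omega> = E) \<and>
        (\<integral>\<^sup>+ \<omega>. query_cost A n \<Delta> (sp_dist E) \<omega> \<partial>coins) \<le>
          ennreal (C * real \<Delta> ^ 3 * 2 ^ \<Delta> * real n * (2 ^ \<Delta> + (log 2 (real n))\<^sup>2) * log 2 (real n)))"
proof (intro exI conjI)
  show "(6::real) > 0" by simp
  show "\<forall>n \<Delta> E. simple_graph n E \<and> connected_graph n E \<and> chordal E \<and> max_degree_le n E \<Delta> \<longrightarrow>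
        query_cost (strat mainp) n \<Delta> (sp_dist E) \<in> borel_measurable coins \<and>
        (AE \<omega> in coins. halts (strat mainp) n \<Delta> (sp_dist E) \<omega> \<and> run_output (strat mainp) n \<Delta> (sp_dist E) \<omega> = E) \<and>
        (\<integral>\<^sup>+ \<omega>. query_cost (strat mainp) n \<Delta> (sp_dist E) \<omega> \<partial>coins) \<le>
          ennreal (6 * real \<Delta> ^ 3 * 2 ^ \<Delta> * real n * (2 ^ \<Delta> + (log 2 (real n))\<^sup>2) * log 2 (real n))"
  proof (intro allI impI)
    fix n \<Delta> E assume H: "simple_graph n E \<and> connected_graph n E \<and> chordal E \<and> max_degree_le n E \<Delta>"
    define c where "c = cost (mainp n \<Delta>) (sp_dist E)"
    define R where "R = 6 * real \<Delta> ^ 3 * 2 ^ \<Delta> * real n * (2 ^ \<Delta> + (log 2 (real n))\<^sup>2) * log 2 (real n)"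
    have run: "\<And>\<omega>. halts (strat mainp) n \<Delta> (sp_dist E) \<omega> \<and> num_queries (strat mainp) n \<Delta> (sp_dist E) \<omega> = c
        \<and> run_output (strat mainp) n \<Delta> (sp_dist E) \<omega> = res (mainp n \<Delta>) (sp_dist E)"
      unfolding c_def by (rule strat_run)
    have qc: "query_cost (strat mainp) n \<Delta> (sp_dist E) = (\<lambda>\<omega>. of_nat c)"
      using run unfolding query_cost_def by auto
    have main: "res (mainp n \<Delta>) (sp_dist E) = E \<and> of_nat c \<le> ennreal R"
    proof (cases "n \<le> 1")
      case True
      then have "mainp n \<Delta> = Ret {}" unfolding mainp_def by simp
      moreover have "E = {}"
      proof -
        have "E \<subseteq> {0..<n} \<times> {0..<n}" "irrefl E" using H unfolding simple_graph_def by auto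
        then have sub: "E \<subseteq> {0..<n} \<times> {0..<n}" and irr: "\<And>a. (a,a) \<notin> E" unfolding irrefl_def by auto
        show ?thesis
        proof (rule ccontr)
          assume "E \<noteq> {}"
          then obtain a b where ab: "(a,b) \<in> E" by auto
          then have "a < n" "b < n" using sub by auto
          then have "a = b" using True by simp
          then show False using ab irr by simp
        qed
      qed
      ultimately show ?thesis unfolding c_def by simp
    next
      case False
      then have n2: "2 \<le> n" by simp
      interpret cgd n E \<Delta>
        using H n2 by unfold_locales auto
      have m: "res (mainp n \<Delta>) (sp_dist E) = E" "c \<le> n + n * (\<Delta> * clog n * (\<Delta> + 1) + \<Delta> * \<Delta>)"
        using main_ok[OF n2] unfolding c_def by auto
      have D1: "1 \<le> \<Delta>" using delta_pos H n2 by blast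
      have "real c \<le> real (n + n * (\<Delta> * clog n * (\<Delta> + 1) + \<Delta> * \<Delta>))" using m(2) by linarith
      also have "\<dots> \<le> R" unfolding R_def by (rule final_ineq[OF n2 D1 clog_bound]) (use n2 in simp)
      finally have "real c \<le> R" .
      then have "of_nat c \<le> ennreal R" by (simp add: ennreal_of_nat_eq_real_of_nat ennreal_leI)
      then show ?thesis using m by simp
    qed
    interpret P: prob_space coins by (rule prob_coins)
    show "query_cost (strat mainp) n \<Delta> (sp_dist E) \<in> borel_measurable coins \<and>
        (AE \<omega> in coins. halts (strat mainp) n \<Delta> (sp_dist E) \<omega> \<and> run_output (strat mainp) n \<Delta> (sp_dist E) \<omega> = E) \<and>
        (\<integral>\<^sup>+ \<omega>. query_cost (strat mainp) n \<Delta> (sp_dist E) \<omega> \<partial>coins) \<le> ennreal R"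
    proof (intro conjI)
      show "query_cost (strat mainp) n \<Delta> (sp_dist E) \<in> borel_measurable coins" unfolding qc by simp
      show "AE \<omega> in coins. halts (strat mainp) n \<Delta> (sp_dist E) \<omega> \<and> run_output (strat mainp) n \<Delta> (sp_dist E) \<omega> = E"
        using run main by simp
      show "(\<integral>\<^sup>+ \<omega>. query_cost (strat mainp) n \<Delta> (sp_dist E) \<omega> \<partial>coins) \<le> ennreal R"
        unfolding qc using main P.emeasure_space_1 by simp
    qed
  qed
qed


end
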